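(* Let $\psi,\psi^*$ be defined on the horizontal edges of the lattice strip by $\psi(x'+iy)=T^{-y}\psi_{x'}T^{y}$ and $\psi^*(x'+iy)=T^{-y}\psi^*_{x'}T^{y}$ ($x'\in C^*$, $y\in\mathbb Z$). There exist unique extensions $\psi,\psi^*:E\to\mathrm{CliffGen}$ to all edges (in particular the vertical ones) such that: (CSH) for any two edges $z_1,z_2$ adjacent to a common vertex $v$ and a common face with centre $p$, $$\psi(z_1)+\frac{i|v-p|}{v-p}\psi^*(z_1)=\psi(z_2)+\frac{i|v-p|}{v-p}\psi^*(z_2);$$ and (CRBV) $\psi(L)+i\psi^*(L)=0$ and $\psi(R)-i\psi^*(R)=0$ for every left boundary edge $L=a+iy'$ and right boundary edge $R=b+iy'$, $y'\in\mathbb Z+\frac12$.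
   Context: Fix integers $a<0<b$, $C=\{a,\dots,b\}$, $C^*=\{a+\frac12,\dots,b-\frac12\}$. $\tilde V$ is the complex vector space with orthonormal basis $(e_\rho)_{\rho\in\{\pm1\}^C}$. For $x'\in C^*$ let $\varsigma_{x'}(\rho)$ be $\rho$ with the signs of all $\rho_x$, $x<x'$, flipped; define linear maps $\psi_{x'}e_\rho=\frac{-\rho_{x'-1/2}+i\rho_{x'+1/2}}{\sqrt2}e_{\varsigma_{x'}(\rho)}$ and $\psi^*_{x'}e_\rho=\frac{-i\rho_{x'-1/2}+\rho_{x'+1/2}}{\sqrt2}e_{\varsigma_{x'}(\rho)}$; $\mathrm{CliffGen}$ is the complex linear span of all $\psi_{x'},\psi^*_{x'}$. With $\beta=\frac12\log(\sqrt2+1)$, let $T_h^{1/2}$ be diagonal with entries $\exp(\frac\beta2\sum_{x=a}^{b-1}\rho_x\rho_{x+1})$, let $e_\tau^\dagger T_ve_\rho=\exp(\beta\sum_{x=a}^b\rho_x\tau_x)\delta_{\tau_a\rho_a}\delta_{\tau_b\rho_b}$, and $T=T_h^{1/2}T_vT_h^{1/2}$ (an invertible matrix). The lattice strip has vertex set $C\times\mathbb Z\subset\mathbb C$ with nearest-neighbour edges $E$; edges are identified with their midpoints, so horizontal edges are $x'+iy$ ($x'\in C^*$, $y\in\mathbb Z$) and vertical edges are $x+iy'$ ($x\in C$, $y'\in\mathbb Z+\frac12$); faces are the unit squares of the strip, with centres $p$. *)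

theory Defs
  imports Complex_Main
begin

text \<open>Spin configurations rho in {+1,-1}^C, C = {a..b}, are encoded as functions
  int => int taking values +1/-1 on C and the (irrelevant) value 1 outside C.
  A linear map on the space V with orthonormal basis (e_rho) is encoded by its
  matrix M, with M tau rho = <e_tau, M e_rho>, and is required to vanish
  outside configs x configs.\<close>

type_synonym spin = "int \<Rightarrow> int"
type_synonym op = "spin \<Rightarrow> spin \<Rightarrow> complex"

definition configs :: "int \<Rightarrow> int \<Rightarrow> spin set" where
  "configs a b = {\<rho>. (\<forall>x. a \<le> x \<and> x \<le> b \<longrightarrow> \<rho> x = 1 \<or> \<rho> x = -1)
                     \<and> (\<forall>x. \<not> (a \<le> x \<and> x \<le> b) \<longrightarrow> \<rho> x = 1)}"

definition op_supported :: "int \<Rightarrow> int \<Rightarrow> op \<Rightarrow> bool" where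
  "op_supported a b M \<longleftrightarrow>
     (\<forall>\<tau> \<rho>. \<tau> \<notin> configs a b \<or> \<rho> \<notin> configs a b \<longrightarrow> M \<tau> \<rho> = 0)"

definition op_mult :: "int \<Rightarrow> int \<Rightarrow> op \<Rightarrow> op \<Rightarrow> op" where
  "op_mult a b A B = (\<lambda>\<tau> \<rho>. \<Sum>\<sigma>\<in>configs a b. A \<tau> \<sigma> * B \<sigma> \<rho>)"

definition op_id :: "int \<Rightarrow> int \<Rightarrow> op" where
  "op_id a b = (\<lambda>\<tau> \<rho>. if \<tau> = \<rho> \<and> \<rho> \<in> configs a b then 1 else 0)"

definition op_inv :: "int \<Rightarrow> int \<Rightarrow> op \<Rightarrow> op" where
  "op_inv a b M = (THE N. op_supported a b N \<and> op_mult a b N M = op_id a b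
                          \<and> op_mult a b M N = op_id a b)"

definition op_pow :: "int \<Rightarrow> int \<Rightarrow> op \<Rightarrow> nat \<Rightarrow> op" where
  "op_pow a b M n = (op_mult a b M ^^ n) (op_id a b)"

definition op_zpow :: "int \<Rightarrow> int \<Rightarrow> op \<Rightarrow> int \<Rightarrow> op" where
  "op_zpow a b M y = (if 0 \<le> y then op_pow a b M (nat y)
                      else op_pow a b (op_inv a b M) (nat (- y)))"

definition beta :: real where
  "beta = ln (sqrt 2 + 1) / 2"

definition Th_half :: "int \<Rightarrow> int \<Rightarrow> op" where
  "Th_half a b = (\<lambda>\<tau> \<rho>. if \<tau> = \<rho> \<and> \<rho> \<in> configs a b
      then complex_of_real (exp (beta / 2 * (\<Sum>x=a..b-1. real_of_int (\<rho> x * \<rho> (x+1)))))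
      else 0)"

definition Tv :: "int \<Rightarrow> int \<Rightarrow> op" where
  "Tv a b = (\<lambda>\<tau> \<rho>. if \<tau> \<in> configs a b \<and> \<rho> \<in> configs a b \<and> \<tau> a = \<rho> a \<and> \<tau> b = \<rho> b
      then complex_of_real (exp (beta * (\<Sum>x=a..b. real_of_int (\<rho> x * \<tau> x))))
      else 0)"

definition Tmat :: "int \<Rightarrow> int \<Rightarrow> op" where
  "Tmat a b = op_mult a b (Th_half a b) (op_mult a b (Tv a b) (Th_half a b))"

text \<open>Dual points x' in C^* are written x' = k + 1/2 with k in {a..b-1}.
  flip a k rho flips all rho_x with x < x', i.e. x <= k (within C).\<close>
definition flip :: "int \<Rightarrow> int \<Rightarrow> spin \<Rightarrow> spin" where
  "flip a k \<rho> = (\<lambda>x. if a \<le> x \<and> x \<le> k then - \<rho> x else \<rho> x)"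

definition psi0 :: "int \<Rightarrow> int \<Rightarrow> int \<Rightarrow> op" where
  "psi0 a b k = (\<lambda>\<tau> \<rho>. if \<rho> \<in> configs a b \<and> \<tau> = flip a k \<rho>
      then (- of_int (\<rho> k) + \<i> * of_int (\<rho> (k+1))) / complex_of_real (sqrt 2) else 0)"

definition psi0_star :: "int \<Rightarrow> int \<Rightarrow> int \<Rightarrow> op" where
  "psi0_star a b k = (\<lambda>\<tau> \<rho>. if \<rho> \<in> configs a b \<and> \<tau> = flip a k \<rho>
      then (- \<i> * of_int (\<rho> k) + of_int (\<rho> (k+1))) / complex_of_real (sqrt 2) else 0)"

definition CliffGen :: "int \<Rightarrow> int \<Rightarrow> op set" where
  "CliffGen a b = {M. \<exists>c d :: int \<Rightarrow> complex.
      M = (\<lambda>\<tau> \<rho>. \<Sum>k=a..b-1. c k * psi0 a b k \<tau> \<rho> + d k * psi0_star a b k \<tau> \<rho>)}"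

text \<open>Lattice strip: edges identified with their midpoints (complex numbers).\<close>
definition edges :: "int \<Rightarrow> int \<Rightarrow> complex set" where
  "edges a b = {Complex (of_int k + 1/2) (of_int y) | k y. a \<le> k \<and> k \<le> b - 1}
             \<union> {Complex (of_int x) (of_int y + 1/2) | x y. a \<le> x \<and> x \<le> b}"

definition vertices :: "int \<Rightarrow> int \<Rightarrow> complex set" where
  "vertices a b = {Complex (of_int x) (of_int y) | x y. a \<le> x \<and> x \<le> b}"

definition face_centres :: "int \<Rightarrow> int \<Rightarrow> complex set" where
  "face_centres a b = {Complex (of_int k + 1/2) (of_int y + 1/2) | k y. a \<le> k \<and> k \<le> b - 1}"

text \<open>An edge z is adjacent to vertex v iff |z - v| = 1/2; an edge z borders the
  face with centre p iff |z - p| = 1/2.\<close>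
definition extension_conds :: "int \<Rightarrow> int \<Rightarrow> (complex \<Rightarrow> op) \<Rightarrow> (complex \<Rightarrow> op) \<Rightarrow> bool" where
  "extension_conds a b \<Psi> \<Psi>s \<longleftrightarrow>
     (\<forall>z\<in>edges a b. \<Psi> z \<in> CliffGen a b \<and> \<Psi>s z \<in> CliffGen a b)
   \<and> (\<forall>k y. a \<le> k \<and> k \<le> b - 1 \<longrightarrow>
        \<Psi> (Complex (of_int k + 1/2) (of_int y)) =
          op_mult a b (op_zpow a b (Tmat a b) (- y)) (op_mult a b (psi0 a b k) (op_zpow a b (Tmat a b) y))
      \<and> \<Psi>s (Complex (of_int k + 1/2) (of_int y)) =
          op_mult a b (op_zpow a b (Tmat a b) (- y)) (op_mult a b (psi0_star a b k) (op_zpow a b (Tmat a b) y)))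
   \<and> (\<forall>z1\<in>edges a b. \<forall>z2\<in>edges a b. \<forall>v\<in>vertices a b. \<forall>p\<in>face_centres a b.
        cmod (z1 - v) = 1/2 \<and> cmod (z2 - v) = 1/2 \<and> cmod (z1 - p) = 1/2 \<and> cmod (z2 - p) = 1/2
        \<longrightarrow> (\<forall>\<tau> \<rho>.
             \<Psi> z1 \<tau> \<rho> + \<i> * complex_of_real (cmod (v - p)) / (v - p) * \<Psi>s z1 \<tau> \<rho> =
             \<Psi> z2 \<tau> \<rho> + \<i> * complex_of_real (cmod (v - p)) / (v - p) * \<Psi>s z2 \<tau> \<rho>))
   \<and> (\<forall>y::int. \<forall>\<tau> \<rho>.
        \<Psi> (Complex (of_int a) (of_int y + 1/2)) \<tau> \<rho> + \<i> * \<Psi>s (Complex (of_int a) (of_int y + 1/2)) \<tau> \<rho> = 0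
      \<and> \<Psi> (Complex (of_int b) (of_int y + 1/2)) \<tau> \<rho> - \<i> * \<Psi>s (Complex (of_int b) (of_int y + 1/2)) \<tau> \<rho> = 0)"

end

theory Submission
  imports Defs "HOL-Library.FuncSet"
begin


lemma flip_flip[simp]: "flip a k (flip a k \<rho>) = \<rho>"
  by (auto simp: flip_def)

lemma flip_in: "\<rho> \<in> configs a b \<Longrightarrow> k \<le> b \<Longrightarrow> flip a k \<rho> \<in> configs a b"
  by (auto simp: flip_def configs_def)

lemma flip_in_iff: "k \<le> b \<Longrightarrow> flip a k \<rho> \<in> configs a b \<longleftrightarrow> \<rho> \<in> configs a b"
  by (metis flip_flip flip_in)

lemma flip_eq_iff: "(\<tau> = flip a k \<rho>) \<longleftrightarrow> (\<rho> = flip a k \<tau>)"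
  by auto

definition extc :: "int \<Rightarrow> int \<Rightarrow> (int \<Rightarrow> int) \<Rightarrow> spin" where
  "extc a b g = (\<lambda>x. if x \<in> {a..b} then g x else 1)"

lemma bij_restrict_configs:
  "bij_betw (\<lambda>\<sigma>. restrict \<sigma> {a..b}) (configs a b) (PiE {a..b} (\<lambda>_. {1,-1}))"
proof (rule bij_betw_byWitness[where f' = "extc a b"])
  show "\<forall>\<sigma>\<in>configs a b. extc a b (restrict \<sigma> {a..b}) = \<sigma>"
    by (auto simp: extc_def configs_def fun_eq_iff)
  show "\<forall>g\<in>PiE {a..b} (\<lambda>_. {1, - 1}). restrict (extc a b g) {a..b} = g"
    by (auto simp: extc_def PiE_def extensional_def fun_eq_iff)
  show "(\<lambda>\<sigma>. restrict \<sigma> {a..b}) ` configs a b \<subseteq> PiE {a..b} (\<lambda>_. {1, - 1})"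
    by (auto simp: configs_def)
  show "extc a b ` PiE {a..b} (\<lambda>_. {1, - 1}) \<subseteq> configs a b"
    by (auto simp: extc_def configs_def PiE_def Pi_def)
qed

lemma finite_configs[simp]: "finite (configs a b)"
proof -
  have "finite (PiE {a..b} (\<lambda>_. {1::int,-1}))" by (intro finite_PiE) auto
  thus ?thesis using bij_betw_finite[OF bij_restrict_configs] by blast
qed

lemma sum_prod_configs:
  fixes F :: "int \<Rightarrow> int \<Rightarrow> 'c::comm_semiring_1"
  shows "(\<Sum>\<sigma>\<in>configs a b. \<Prod>x\<in>{a..b}. F x (\<sigma> x)) = (\<Prod>x\<in>{a..b}. F x 1 + F x (-1))"
proof -
  have "(\<Sum>\<sigma>\<in>configs a b. \<Prod>x\<in>{a..b}. F x (\<sigma> x))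
      = (\<Sum>\<sigma>\<in>configs a b. (\<lambda>g. \<Prod>x\<in>{a..b}. F x (g x)) (restrict \<sigma> {a..b}))"
    by (intro sum.cong refl prod.cong) auto
  also have "\<dots> = (\<Sum>g\<in>PiE {a..b} (\<lambda>_. {1,-1}). \<Prod>x\<in>{a..b}. F x (g x))"
    by (rule sum.reindex_bij_betw[OF bij_restrict_configs])
  also have "\<dots> = (\<Prod>x\<in>{a..b}. \<Sum>y\<in>{1,-1}. F x y)"
    by (rule prod_sum_PiE[symmetric]) auto
  finally show ?thesis by simp
qed

lemma op_mult_assoc: "op_mult a b (op_mult a b A B) C = op_mult a b A (op_mult a b B C)"
  unfolding op_mult_def
  by (auto simp: fun_eq_iff sum_distrib_left sum_distrib_right mult.assoc intro: sum.swap)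

lemma op_mult_id_left: "op_supported a b M \<Longrightarrow> op_mult a b (op_id a b) M = M"
proof (intro ext)
  fix \<tau> \<rho> assume M: "op_supported a b M"
  have "op_mult a b (op_id a b) M \<tau> \<rho> = (\<Sum>\<sigma>\<in>configs a b. if \<sigma> = \<tau> then M \<sigma> \<rho> else 0)"
    unfolding op_mult_def op_id_def by (intro sum.cong) auto
  also have "\<dots> = M \<tau> \<rho>" using M by (simp add: op_supported_def)
  finally show "op_mult a b (op_id a b) M \<tau> \<rho> = M \<tau> \<rho>" .
qed

lemma op_mult_id_right: "op_supported a b M \<Longrightarrow> op_mult a b M (op_id a b) = M"
proof (intro ext)
  fix \<tau> \<rho> assume M: "op_supported a b M"
  have "op_mult a b M (op_id a b) \<tau> \<rho> = (\<Sum>\<sigma>\<in>configs a b. if \<sigma> = \<rho> then M \<tau> \<sigma> else 0)"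
    unfolding op_mult_def op_id_def by (intro sum.cong) auto
  also have "\<dots> = M \<tau> \<rho>" using M by (simp add: op_supported_def)
  finally show "op_mult a b M (op_id a b) \<tau> \<rho> = M \<tau> \<rho>" .
qed

lemma op_supported_mult: "op_supported a b A \<Longrightarrow> op_supported a b B \<Longrightarrow> op_supported a b (op_mult a b A B)"
  unfolding op_supported_def op_mult_def by auto

lemma op_supported_id: "op_supported a b (op_id a b)"
  unfolding op_supported_def op_id_def by auto



definition mono :: "int \<Rightarrow> int \<Rightarrow> int \<Rightarrow> (spin \<Rightarrow> complex) \<Rightarrow> op" where
  "mono a b k f = (\<lambda>\<tau> \<rho>. if \<rho> \<in> configs a b \<and> \<tau> = flip a k \<rho> then f \<rho> else 0)"

definition Lop :: "int \<Rightarrow> int \<Rightarrow> int \<Rightarrow> complex \<Rightarrow> complex \<Rightarrow> op" where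
  "Lop a b k \<alpha> \<gamma> = mono a b k (\<lambda>\<rho>. \<alpha> * of_int (\<rho> k) + \<gamma> * of_int (\<rho> (k+1)))"

lemma mult_mono_left:
  assumes "k \<le> b"
  shows "op_mult a b (mono a b k f) M \<tau> \<rho> =
    (if \<tau> \<in> configs a b then f (flip a k \<tau>) * M (flip a k \<tau>) \<rho> else 0)"
proof -
  have "op_mult a b (mono a b k f) M \<tau> \<rho> =
     (\<Sum>\<sigma>\<in>configs a b. if \<sigma> = flip a k \<tau> then f \<sigma> * M \<sigma> \<rho> else 0)"
    unfolding op_mult_def mono_def by (intro sum.cong) auto
  also have "\<dots> = (if \<tau> \<in> configs a b then f (flip a k \<tau>) * M (flip a k \<tau>) \<rho> else 0)"
    using flip_in_iff[OF assms] by simp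
  finally show ?thesis .
qed

lemma mult_mono_right:
  assumes "k \<le> b"
  shows "op_mult a b M (mono a b k f) \<tau> \<rho> =
    (if \<rho> \<in> configs a b then M \<tau> (flip a k \<rho>) * f \<rho> else 0)"
proof -
  have "op_mult a b M (mono a b k f) \<tau> \<rho> =
     (\<Sum>\<sigma>\<in>configs a b. if \<sigma> = flip a k \<rho> then (if \<rho> \<in> configs a b then M \<tau> \<sigma> * f \<rho> else 0) else 0)"
    unfolding op_mult_def mono_def by (intro sum.cong) auto
  also have "\<dots> = (if \<rho> \<in> configs a b then M \<tau> (flip a k \<rho>) * f \<rho> else 0)"
    using flip_in_iff[OF assms] by simp
  finally show ?thesis .
qed

definition Hs :: "int \<Rightarrow> int \<Rightarrow> spin \<Rightarrow> real" where
  "Hs a b \<rho> = (\<Sum>x=a..b-1. real_of_int (\<rho> x * \<rho> (x+1)))"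

definition Vs :: "int \<Rightarrow> int \<Rightarrow> spin \<Rightarrow> spin \<Rightarrow> real" where
  "Vs a b \<tau> \<rho> = (\<Sum>x=a..b. real_of_int (\<rho> x * \<tau> x))"

definition Ds :: "int \<Rightarrow> int \<Rightarrow> spin \<Rightarrow> spin \<Rightarrow> real" where
  "Ds a j \<tau> \<rho> = (\<Sum>x=a..j. real_of_int (\<rho> x * \<tau> x))"

definition hh :: "int \<Rightarrow> int \<Rightarrow> spin \<Rightarrow> complex" where
  "hh a b \<rho> = complex_of_real (exp (beta / 2 * Hs a b \<rho>))"

lemma mult_Th_left:
  "op_mult a b (Th_half a b) M \<tau> \<rho> = (if \<tau> \<in> configs a b then hh a b \<tau> * M \<tau> \<rho> else 0)"
proof -
  have "op_mult a b (Th_half a b) M \<tau> \<rho> =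
     (\<Sum>\<sigma>\<in>configs a b. if \<sigma> = \<tau> then hh a b \<tau> * M \<tau> \<rho> else 0)"
    unfolding op_mult_def Th_half_def hh_def Hs_def by (intro sum.cong) auto
  thus ?thesis by simp
qed

lemma mult_Th_right:
  "op_mult a b M (Th_half a b) \<tau> \<rho> = (if \<rho> \<in> configs a b then M \<tau> \<rho> * hh a b \<rho> else 0)"
proof -
  have "op_mult a b M (Th_half a b) \<tau> \<rho> =
     (\<Sum>\<sigma>\<in>configs a b. if \<sigma> = \<rho> then (if \<rho> \<in> configs a b then M \<tau> \<rho> * hh a b \<rho> else 0) else 0)"
    unfolding op_mult_def Th_half_def hh_def Hs_def by (intro sum.cong) auto
  thus ?thesis by simp
qed

lemma Tmat_entry:
  "Tmat a b \<tau> \<rho> = (if \<tau> \<in> configs a b \<and> \<rho> \<in> configs a b \<and> \<tau> a = \<rho> a \<and> \<tau> b = \<rho> b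
     then complex_of_real (exp (beta / 2 * Hs a b \<tau> + beta * Vs a b \<tau> \<rho> + beta / 2 * Hs a b \<rho>))
     else 0)"
  unfolding Tmat_def mult_Th_left mult_Th_right
  by (auto simp: Tv_def hh_def Vs_def exp_add)

lemma in_configs_pm: "\<rho> \<in> configs a b \<Longrightarrow> a \<le> x \<Longrightarrow> x \<le> b \<Longrightarrow> \<rho> x = 1 \<or> \<rho> x = -1"
  by (auto simp: configs_def)

lemma Hs_flip:
  assumes "a \<le> j" "j \<le> b - 1"
  shows "Hs a b (flip a j \<rho>) = Hs a b \<rho> - 2 * real_of_int (\<rho> j * \<rho> (j+1))"
proof -
  have "Hs a b (flip a j \<rho>) = (\<Sum>x=a..b-1. real_of_int (\<rho> x * \<rho> (x+1)) -
          (if x = j then 2 * real_of_int (\<rho> j * \<rho> (j+1)) else 0))"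
    unfolding Hs_def by (intro sum.cong refl) (auto simp: flip_def)
  also have "\<dots> = Hs a b \<rho> - 2 * real_of_int (\<rho> j * \<rho> (j+1))"
    using assms by (simp add: sum_subtractf Hs_def)
  finally show ?thesis .
qed

lemma sum_upto_filter:
  fixes a b j :: int
  assumes "j \<le> b"
  shows "(\<Sum>x=a..b. if x \<le> j then g x else 0) = (\<Sum>x=a..j. (g x :: real))"
proof -
  have "(\<Sum>x=a..b. if x \<le> j then g x else 0) = (\<Sum>x\<in>{x\<in>{a..b}. x \<le> j}. g x)"
    by (rule sum.inter_filter[symmetric]) simp
  also have "{x\<in>{a..b}. x \<le> j} = {a..j}" using assms by auto
  finally show ?thesis by simp
qed

lemma Vs_flip_right:
  assumes "j \<le> b"
  shows "Vs a b \<tau> (flip a j \<rho>) = Vs a b \<tau> \<rho> - 2 * Ds a j \<tau> \<rho>"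
proof -
  have "Vs a b \<tau> (flip a j \<rho>) = (\<Sum>x=a..b. real_of_int (\<rho> x * \<tau> x) -
          (if x \<le> j then 2 * real_of_int (\<rho> x * \<tau> x) else 0))"
    unfolding Vs_def by (intro sum.cong refl) (auto simp: flip_def)
  also have "\<dots> = Vs a b \<tau> \<rho> - 2 * Ds a j \<tau> \<rho>"
    using sum_upto_filter[OF assms, where a=a and g="\<lambda>x. 2 * real_of_int (\<rho> x * \<tau> x)"]
    by (simp add: sum_subtractf Vs_def Ds_def sum_distrib_left)
  finally show ?thesis .
qed

lemma Vs_flip_left:
  assumes "j \<le> b"
  shows "Vs a b (flip a j \<tau>) \<rho> = Vs a b \<tau> \<rho> - 2 * Ds a j \<tau> \<rho>"
proof -
  have "Vs a b (flip a j \<tau>) \<rho> = (\<Sum>x=a..b. real_of_int (\<rho> x * \<tau> x) -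
          (if x \<le> j then 2 * real_of_int (\<rho> x * \<tau> x) else 0))"
    unfolding Vs_def by (intro sum.cong refl) (auto simp: flip_def)
  also have "\<dots> = Vs a b \<tau> \<rho> - 2 * Ds a j \<tau> \<rho>"
    using sum_upto_filter[OF assms, where a=a and g="\<lambda>x. 2 * real_of_int (\<rho> x * \<tau> x)"]
    by (simp add: sum_subtractf Vs_def Ds_def sum_distrib_left)
  finally show ?thesis .
qed

lemma Ds_step:
  assumes "a \<le> X"
  shows "Ds a X \<tau> \<rho> = Ds a (X - 1) \<tau> \<rho> + real_of_int (\<rho> X * \<tau> X)"
proof -
  have "{a..X} = insert X {a..X-1}" using assms by auto
  thus ?thesis unfolding Ds_def by simp
qed

lemma T_flip_right:
  assumes "a \<le> j" "j \<le> b - 1" "\<tau> \<in> configs a b" "\<rho> \<in> configs a b"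
  shows "Tmat a b \<tau> (flip a j \<rho>) = (if \<tau> a = - \<rho> a \<and> \<tau> b = \<rho> b then
     complex_of_real (exp (beta / 2 * Hs a b \<tau> + beta * (Vs a b \<tau> \<rho> - 2 * Ds a j \<tau> \<rho>)
       + beta / 2 * Hs a b \<rho> - beta * real_of_int (\<rho> j * \<rho> (j+1)))) else 0)"
proof -
  have fin: "flip a j \<rho> \<in> configs a b" using assms flip_in by auto
  have e: "flip a j \<rho> a = - \<rho> a" "flip a j \<rho> b = \<rho> b" using assms by (auto simp: flip_def)
  show ?thesis
    unfolding Tmat_entry using assms fin
    by (auto simp: e Hs_flip Vs_flip_right algebra_simps)
qed

lemma T_flip_left:
  assumes "a \<le> j" "j \<le> b - 1" "\<tau> \<in> configs a b" "\<rho> \<in> configs a b"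
  shows "Tmat a b (flip a j \<tau>) \<rho> = (if \<tau> a = - \<rho> a \<and> \<tau> b = \<rho> b then
     complex_of_real (exp (beta / 2 * Hs a b \<tau> + beta * (Vs a b \<tau> \<rho> - 2 * Ds a j \<tau> \<rho>)
       + beta / 2 * Hs a b \<rho> - beta * real_of_int (\<tau> j * \<tau> (j+1)))) else 0)"
proof -
  have fin: "flip a j \<tau> \<in> configs a b" using assms flip_in by auto
  have e: "flip a j \<tau> a = - \<tau> a" "flip a j \<tau> b = \<tau> b" using assms by (auto simp: flip_def)
  show ?thesis
    unfolding Tmat_entry using assms fin
    by (auto simp: e Hs_flip Vs_flip_left algebra_simps)
qed



definition Eb :: "int \<Rightarrow> real" where "Eb n = exp (beta * of_int n)"

lemma exp_2beta: "exp (2 * beta) = 1 + sqrt 2"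
proof -
  have "2 * beta = ln (sqrt 2 + 1)" by (simp add: beta_def)
  moreover have "sqrt 2 + 1 > 0" by (simp add: add_pos_pos)
  ultimately show ?thesis by simp
qed

lemma Eb_add: "Eb (m + n) = Eb m * Eb n"
  by (simp add: Eb_def distrib_left exp_add)

lemma Eb_0: "Eb 0 = 1" by (simp add: Eb_def)

lemma Eb_2: "Eb 2 = 1 + sqrt 2" using exp_2beta by (simp add: Eb_def mult.commute)

lemma Eb_11: "Eb 1 * Eb 1 = 1 + sqrt 2" using Eb_add[of 1 1] Eb_2 by simp

lemma abstract_inv:
  fixes e f q :: real
  assumes "e * f = 1" "e * e = 1 + q" "q * q = 2"
  shows "f = e * (q - 1)"
proof -
  have "(1 + q) * (q - 1) = 1" using assms(3) by (simp add: algebra_simps)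
  hence "f = f * ((1 + q) * (q - 1))" by simp
  also have "\<dots> = f * (e * e) * (q - 1)" using assms(2) by simp
  also have "\<dots> = (e * f) * e * (q - 1)" by (simp add: algebra_simps)
  also have "\<dots> = e * (q - 1)" using assms(1) by simp
  finally show ?thesis .
qed

lemma Eb_m1: "Eb (-1) = Eb 1 * (sqrt 2 - 1)"
  using abstract_inv[of "Eb 1" "Eb (-1)" "sqrt 2"] Eb_add[of 1 "-1"] Eb_0 Eb_11 by simp

lemma Eb_3: "Eb 3 = Eb 1 * (1 + sqrt 2)"
  using Eb_add[of 1 2] Eb_2 by simp

lemma abstract_m3:
  fixes e q :: real
  assumes "e * e = 1 + q" "q * q = 2"
  shows "(e * (q - 1)) * (e * (q - 1)) * (e * (q - 1)) = e * (q - 1) * (q - 1)"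
proof -
  have "(e * (q - 1)) * (e * (q - 1)) * (e * (q - 1)) = (e * e) * (q - 1) * (q - 1) * e * (q - 1)"
    by (simp add: algebra_simps)
  also have "\<dots> = ((1 + q) * (q - 1)) * (q - 1) * e * (q - 1)" using assms(1) by (simp add: algebra_simps)
  also have "(1 + q) * (q - 1) = 1" using assms(2) by (simp add: algebra_simps)
  finally show ?thesis by (simp add: algebra_simps)
qed

lemma Eb_m3: "Eb (-3) = Eb 1 * (sqrt 2 - 1) * (sqrt 2 - 1)"
proof -
  have "Eb (-3) = Eb (-1) * Eb (-1) * Eb (-1)" using Eb_add[of "-1" "-2"] Eb_add[of "-1" "-1"] by simp
  also have "\<dots> = Eb 1 * (sqrt 2 - 1) * (sqrt 2 - 1)"
    unfolding Eb_m1 by (rule abstract_m3[OF Eb_11]) simp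
  finally show ?thesis .
qed

lemma local_poly_T1:
  fixes t0 t1 rm r0 r1 :: int and q e :: real and E :: "int \<Rightarrow> real"
  assumes q: "q * q = 2" and E: "E 1 = e" "E (-1) = e * (q - 1)" "E 3 = e * (1 + q)" "E (-3) = e * (q - 1) * (q - 1)"
  assumes "t0 = 1 \<or> t0 = -1" "t1 = 1 \<or> t1 = -1" "rm = 1 \<or> rm = -1" "r0 = 1 \<or> r0 = -1" "r1 = 1 \<or> r1 = -1"
  shows "((1 + q) * t0 + t1) * E (- (t0 * t1)) =
     - q * ((1 + q) * r0 + r1) * E (- (r0 * r1)) + (1 + q) * ((q - 1) * rm + r0) * E (2 * t0 * r0 - rm * r0)"
proof -
  have q2: "q * (q * x) = 2 * x" for x using q by (simp add: mult.assoc[symmetric])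
  show ?thesis using assms(6-)
    by (elim disjE; simp add: E algebra_simps q q2)
qed

lemma local_poly_T2:
  fixes tm t0 rm r0 r1 :: int and q e :: real and E :: "int \<Rightarrow> real"
  assumes q: "q * q = 2" and E: "E 1 = e" "E (-1) = e * (q - 1)" "E 3 = e * (1 + q)" "E (-3) = e * (q - 1) * (q - 1)"
  assumes "tm = 1 \<or> tm = -1" "t0 = 1 \<or> t0 = -1" "rm = 1 \<or> rm = -1" "r0 = 1 \<or> r0 = -1" "r1 = 1 \<or> r1 = -1"
  shows "((q - 1) * tm + t0) * E (2 * r0 * t0 - tm * t0) =
     (1 - q) * ((1 + q) * r0 + r1) * E (- (r0 * r1)) + q * ((q - 1) * rm + r0) * E (2 * r0 * t0 - rm * r0)"
proof -
  have q2: "q * (q * x) = 2 * x" for x using q by (simp add: mult.assoc[symmetric])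
  show ?thesis using assms(6-)
    by (elim disjE; simp add: E algebra_simps q q2)
qed

lemma local_poly_Ta:
  fixes t0 t1 r0 r1 :: int and q e :: real and E :: "int \<Rightarrow> real"
  assumes q: "q * q = 2" and E: "E 1 = e" "E (-1) = e * (q - 1)"
  assumes "t0 = 1 \<or> t0 = -1" "t1 = 1 \<or> t1 = -1" "r0 = - t0" "r1 = 1 \<or> r1 = -1"
  shows "((1 + q) * t0 + t1) * E (- (t0 * t1)) = (- (1 + q) * r0 - r1) * E (- (r0 * r1))"
proof -
  have q2: "q * (q * x) = 2 * x" for x using q by (simp add: mult.assoc[symmetric])
  show ?thesis using assms(4-)
    by (elim disjE; simp add: E algebra_simps q q2)
qed

lemma local_poly_Tb:
  fixes t0 t1 r0 r1 :: int and q e :: real and E :: "int \<Rightarrow> real"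
  assumes q: "q * q = 2" and E: "E 1 = e" "E (-1) = e * (q - 1)"
  assumes "t0 = 1 \<or> t0 = -1" "t1 = 1 \<or> t1 = -1" "r0 = 1 \<or> r0 = -1" "r1 = t1"
  shows "((q - 1) * t0 + t1) * E (- (t0 * t1)) = ((q - 1) * r0 + r1) * E (- (r0 * r1))"
proof -
  have q2: "q * (q * x) = 2 * x" for x using q by (simp add: mult.assoc[symmetric])
  show ?thesis using assms(4-)
    by (elim disjE; simp add: E algebra_simps q q2)
qed

lemmas Eb_facts = Eb_m1 Eb_3 Eb_m3



abbreviation sq :: complex where "sq \<equiv> complex_of_real (sqrt 2)"

lemma op_mult_lin_right:
  "op_mult a b M (\<lambda>\<tau> \<rho>. c1 * A \<tau> \<rho> + c2 * B \<tau> \<rho>) \<tau> \<rho> = c1 * op_mult a b M A \<tau> \<rho> + c2 * op_mult a b M B \<tau> \<rho>"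
  unfolding op_mult_def by (simp add: sum.distrib sum_distrib_left algebra_simps)

lemma op_mult_lin_left:
  "op_mult a b (\<lambda>\<tau> \<rho>. c1 * A \<tau> \<rho> + c2 * B \<tau> \<rho>) M \<tau> \<rho> = c1 * op_mult a b A M \<tau> \<rho> + c2 * op_mult a b B M \<tau> \<rho>"
  unfolding op_mult_def by (simp add: sum.distrib sum_distrib_left algebra_simps)

lemma exp_Eb: "exp Z * Eb n = exp (Z + beta * of_int n)"
  by (simp add: Eb_def exp_add)

lemma T_zero_left: "\<tau> \<notin> configs a b \<Longrightarrow> Tmat a b \<tau> \<rho> = 0"
  by (simp add: Tmat_entry)
lemma T_zero_right: "\<rho> \<notin> configs a b \<Longrightarrow> Tmat a b \<tau> \<rho> = 0"
  by (simp add: Tmat_entry)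

definition Zx :: "int \<Rightarrow> int \<Rightarrow> int \<Rightarrow> spin \<Rightarrow> spin \<Rightarrow> real" where
  "Zx a b j \<tau> \<rho> = beta / 2 * Hs a b \<tau> + beta * (Vs a b \<tau> \<rho> - 2 * Ds a j \<tau> \<rho>) + beta / 2 * Hs a b \<rho>"

lemma T_flip_left':
  assumes "a \<le> j" "j \<le> b - 1" "\<tau> \<in> configs a b" "\<rho> \<in> configs a b" "\<tau> a = - \<rho> a" "\<tau> b = \<rho> b"
  shows "Tmat a b (flip a j \<tau>) \<rho> = complex_of_real (exp (Zx a b j \<tau> \<rho>) * Eb (- (\<tau> j * \<tau> (j+1))))"
  unfolding T_flip_left[OF assms(1-4)] exp_Eb Zx_def using assms(5,6) by (simp add: algebra_simps)

lemma T_flip_right':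
  assumes "a \<le> j" "j \<le> b - 1" "\<tau> \<in> configs a b" "\<rho> \<in> configs a b" "\<tau> a = - \<rho> a" "\<tau> b = \<rho> b"
  shows "Tmat a b \<tau> (flip a j \<rho>) = complex_of_real (exp (Zx a b j \<tau> \<rho>) * Eb (- (\<rho> j * \<rho> (j+1))))"
  unfolding T_flip_right[OF assms(1-4)] exp_Eb Zx_def using assms(5,6) by (simp add: algebra_simps)

lemma T_flip_right_prev:
  assumes "a < j" "j \<le> b - 1" "\<tau> \<in> configs a b" "\<rho> \<in> configs a b" "\<tau> a = - \<rho> a" "\<tau> b = \<rho> b"
  shows "Tmat a b \<tau> (flip a (j - 1) \<rho>) = complex_of_real (exp (Zx a b j \<tau> \<rho>) * Eb (2 * \<tau> j * \<rho> j - \<rho> (j - 1) * \<rho> j))"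
proof -
  have "Tmat a b \<tau> (flip a (j - 1) \<rho>) = complex_of_real (exp (Zx a b (j - 1) \<tau> \<rho>) * Eb (- (\<rho> (j - 1) * \<rho> j)))"
    using T_flip_right'[of a "j - 1" b \<tau> \<rho>] assms by simp
  also have "exp (Zx a b (j - 1) \<tau> \<rho>) * Eb (- (\<rho> (j - 1) * \<rho> j)) = exp (Zx a b j \<tau> \<rho>) * Eb (2 * \<tau> j * \<rho> j - \<rho> (j - 1) * \<rho> j)"
    unfolding exp_Eb Zx_def using Ds_step[of a j \<tau> \<rho>] assms(1) by (intro arg_cong[where f=exp]) (simp add: algebra_simps)
  finally show ?thesis .
qed

lemma T_flip_left_prev:
  assumes "a < j" "j \<le> b - 1" "\<tau> \<in> configs a b" "\<rho> \<in> configs a b" "\<tau> a = - \<rho> a" "\<tau> b = \<rho> b"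
  shows "Tmat a b (flip a (j - 1) \<tau>) \<rho> = complex_of_real (exp (Zx a b j \<tau> \<rho>) * Eb (2 * \<rho> j * \<tau> j - \<tau> (j - 1) * \<tau> j))"
proof -
  have "Tmat a b (flip a (j - 1) \<tau>) \<rho> = complex_of_real (exp (Zx a b (j - 1) \<tau> \<rho>) * Eb (- (\<tau> (j - 1) * \<tau> j)))"
    using T_flip_left'[of a "j - 1" b \<tau> \<rho>] assms by simp
  also have "exp (Zx a b (j - 1) \<tau> \<rho>) * Eb (- (\<tau> (j - 1) * \<tau> j)) = exp (Zx a b j \<tau> \<rho>) * Eb (2 * \<rho> j * \<tau> j - \<tau> (j - 1) * \<tau> j)"
    unfolding exp_Eb Zx_def using Ds_step[of a j \<tau> \<rho>] assms(1) by (intro arg_cong[where f=exp]) (simp add: algebra_simps)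
  finally show ?thesis .
qed

lemma T_flip_zero_left:
  assumes "a \<le> j" "j \<le> b - 1" "\<tau> \<in> configs a b" "\<rho> \<in> configs a b" "\<not> (\<tau> a = - \<rho> a \<and> \<tau> b = \<rho> b)"
  shows "Tmat a b (flip a j \<tau>) \<rho> = 0"
  using T_flip_left[OF assms(1-4)] assms(5) by simp

lemma T_flip_zero_right:
  assumes "a \<le> j" "j \<le> b - 1" "\<tau> \<in> configs a b" "\<rho> \<in> configs a b" "\<not> (\<tau> a = - \<rho> a \<and> \<tau> b = \<rho> b)"
  shows "Tmat a b \<tau> (flip a j \<rho>) = 0"
  using T_flip_right[OF assms(1-4)] assms(5) by simp

lemma Eb_vals: "Eb (-1) = Eb 1 * (sqrt 2 - 1)" "Eb 3 = Eb 1 * (1 + sqrt 2)" "Eb (-3) = Eb 1 * (sqrt 2 - 1) * (sqrt 2 - 1)"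
  by (rule Eb_m1 Eb_3 Eb_m3)+

lemma sq_sq: "sq * sq = 2" "sq * (sq * x) = 2 * x"
proof -
  show "sq * sq = 2" by (metis of_real_mult of_real_numeral real_sqrt_mult_self real_sqrt_abs2 abs_numeral)
  thus "sq * (sq * x) = 2 * x" by (simp add: mult.assoc[symmetric])
qed

lemma rel_T1:
  assumes "a < X" "X < b"
  shows "op_mult a b (Lop a b X (-(1+sq)) 1) (Tmat a b) =
         op_mult a b (Tmat a b) (\<lambda>\<tau> \<rho>. - sq * Lop a b X (1+sq) 1 \<tau> \<rho> + (1+sq) * Lop a b (X-1) (sq-1) 1 \<tau> \<rho>)"
proof (intro ext)
  fix \<tau> \<rho>
  have Xb: "X \<le> b" "X - 1 \<le> b" using assms by auto
  have L: "op_mult a b (Lop a b X (-(1+sq)) 1) (Tmat a b) \<tau> \<rho> =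
     (if \<tau> \<in> configs a b then ((1+sq) * of_int (\<tau> X) + of_int (\<tau> (X+1))) * Tmat a b (flip a X \<tau>) \<rho> else 0)"
  proof -
    have "flip a X \<tau> X = - \<tau> X" "flip a X \<tau> (X+1) = \<tau> (X+1)" using assms by (auto simp: flip_def)
    thus ?thesis unfolding Lop_def mult_mono_left[OF Xb(1)] by (simp add: algebra_simps)
  qed
  have R: "op_mult a b (Tmat a b) (\<lambda>\<tau> \<rho>. - sq * Lop a b X (1+sq) 1 \<tau> \<rho> + (1+sq) * Lop a b (X-1) (sq-1) 1 \<tau> \<rho>) \<tau> \<rho>
     = - sq * (if \<rho> \<in> configs a b then Tmat a b \<tau> (flip a X \<rho>) * ((1+sq) * of_int (\<rho> X) + of_int (\<rho> (X+1))) else 0)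
       + (1+sq) * (if \<rho> \<in> configs a b then Tmat a b \<tau> (flip a (X-1) \<rho>) * ((sq-1) * of_int (\<rho> (X-1)) + of_int (\<rho> X)) else 0)"
    unfolding op_mult_lin_right Lop_def mult_mono_right[OF Xb(1)] mult_mono_right[OF Xb(2)] by simp
  show "op_mult a b (Lop a b X (-(1+sq)) 1) (Tmat a b) \<tau> \<rho> =
         op_mult a b (Tmat a b) (\<lambda>\<tau> \<rho>. - sq * Lop a b X (1+sq) 1 \<tau> \<rho> + (1+sq) * Lop a b (X-1) (sq-1) 1 \<tau> \<rho>) \<tau> \<rho>"
  proof (cases "\<tau> \<in> configs a b \<and> \<rho> \<in> configs a b")
    case False
    thus ?thesis unfolding L R by (auto simp: T_zero_left T_zero_right)
  next
    case True
    hence ts: "\<tau> \<in> configs a b" and rs: "\<rho> \<in> configs a b" by auto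
    show ?thesis
    proof (cases "\<tau> a = - \<rho> a \<and> \<tau> b = \<rho> b")
      case False
      thus ?thesis unfolding L R using assms ts rs
        by (simp add: T_flip_zero_left T_flip_zero_right)
    next
      case True
      have pm: "\<tau> X = 1 \<or> \<tau> X = -1" "\<tau> (X+1) = 1 \<or> \<tau> (X+1) = -1"
        "\<rho> (X-1) = 1 \<or> \<rho> (X-1) = -1" "\<rho> X = 1 \<or> \<rho> X = -1" "\<rho> (X+1) = 1 \<or> \<rho> (X+1) = -1"
        using in_configs_pm[OF ts] in_configs_pm[OF rs] assms by auto
      have s2: "sqrt 2 * sqrt 2 = (2::real)" by simp
      note loc = local_poly_T1[where q="sqrt 2" and e="Eb 1" and E=Eb, OF s2 refl Eb_vals pm]
      have loc': "complex_of_real (exp (Zx a b X \<tau> \<rho>) * (((1 + sqrt 2) * \<tau> X + \<tau> (X+1)) * Eb (- (\<tau> X * \<tau> (X+1)))))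
        = complex_of_real (exp (Zx a b X \<tau> \<rho>) * (- sqrt 2 * ((1 + sqrt 2) * \<rho> X + \<rho> (X+1)) * Eb (- (\<rho> X * \<rho> (X+1))) + (1 + sqrt 2) * ((sqrt 2 - 1) * \<rho> (X-1) + \<rho> X) * Eb (2 * \<tau> X * \<rho> X - \<rho> (X-1) * \<rho> X)))"
        using loc by simp
      have e1: "Tmat a b (flip a X \<tau>) \<rho> = complex_of_real (exp (Zx a b X \<tau> \<rho>) * Eb (- (\<tau> X * \<tau> (X+1))))"
        using T_flip_left' ts rs True assms by simp
      have e2: "Tmat a b \<tau> (flip a X \<rho>) = complex_of_real (exp (Zx a b X \<tau> \<rho>) * Eb (- (\<rho> X * \<rho> (X+1))))"
        using T_flip_right' ts rs True assms by simp
      have e3: "Tmat a b \<tau> (flip a (X - 1) \<rho>) = complex_of_real (exp (Zx a b X \<tau> \<rho>) * Eb (2 * \<tau> X * \<rho> X - \<rho> (X - 1) * \<rho> X))"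
        using T_flip_right_prev ts rs True assms by simp
      show ?thesis unfolding L R e1 e2 e3 using ts rs loc' by (simp add: algebra_simps sq_sq)
    qed
  qed
qed

lemma rel_T2:
  assumes "a < X" "X < b"
  shows "op_mult a b (Lop a b (X-1) (1-sq) 1) (Tmat a b) =
         op_mult a b (Tmat a b) (\<lambda>\<tau> \<rho>. (1 - sq) * Lop a b X (1+sq) 1 \<tau> \<rho> + sq * Lop a b (X-1) (sq-1) 1 \<tau> \<rho>)"
proof (intro ext)
  fix \<tau> \<rho>
  have Xb: "X \<le> b" "X - 1 \<le> b" using assms by auto
  have L: "op_mult a b (Lop a b (X-1) (1-sq) 1) (Tmat a b) \<tau> \<rho> =
     (if \<tau> \<in> configs a b then ((sq - 1) * of_int (\<tau> (X-1)) + of_int (\<tau> X)) * Tmat a b (flip a (X-1) \<tau>) \<rho> else 0)"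
  proof -
    have "flip a (X-1) \<tau> (X-1) = - \<tau> (X-1)" "flip a (X-1) \<tau> X = \<tau> X" using assms by (auto simp: flip_def)
    thus ?thesis unfolding Lop_def mult_mono_left[OF Xb(2)] by (simp add: algebra_simps)
  qed
  have R: "op_mult a b (Tmat a b) (\<lambda>\<tau> \<rho>. (1 - sq) * Lop a b X (1+sq) 1 \<tau> \<rho> + sq * Lop a b (X-1) (sq-1) 1 \<tau> \<rho>) \<tau> \<rho>
     = (1 - sq) * (if \<rho> \<in> configs a b then Tmat a b \<tau> (flip a X \<rho>) * ((1+sq) * of_int (\<rho> X) + of_int (\<rho> (X+1))) else 0)
       + sq * (if \<rho> \<in> configs a b then Tmat a b \<tau> (flip a (X-1) \<rho>) * ((sq-1) * of_int (\<rho> (X-1)) + of_int (\<rho> X)) else 0)"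
    unfolding op_mult_lin_right Lop_def mult_mono_right[OF Xb(1)] mult_mono_right[OF Xb(2)] by simp
  show "op_mult a b (Lop a b (X-1) (1-sq) 1) (Tmat a b) \<tau> \<rho> =
         op_mult a b (Tmat a b) (\<lambda>\<tau> \<rho>. (1 - sq) * Lop a b X (1+sq) 1 \<tau> \<rho> + sq * Lop a b (X-1) (sq-1) 1 \<tau> \<rho>) \<tau> \<rho>"
  proof (cases "\<tau> \<in> configs a b \<and> \<rho> \<in> configs a b")
    case False
    thus ?thesis unfolding L R by (auto simp: T_zero_left T_zero_right)
  next
    case True
    hence ts: "\<tau> \<in> configs a b" and rs: "\<rho> \<in> configs a b" by auto
    show ?thesis
    proof (cases "\<tau> a = - \<rho> a \<and> \<tau> b = \<rho> b")
      case False
      thus ?thesis unfolding L R using assms ts rs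
        by (simp add: T_flip_zero_left T_flip_zero_right)
    next
      case True
      have pm: "\<tau> (X-1) = 1 \<or> \<tau> (X-1) = -1" "\<tau> X = 1 \<or> \<tau> X = -1"
        "\<rho> (X-1) = 1 \<or> \<rho> (X-1) = -1" "\<rho> X = 1 \<or> \<rho> X = -1" "\<rho> (X+1) = 1 \<or> \<rho> (X+1) = -1"
        using in_configs_pm[OF ts] in_configs_pm[OF rs] assms by auto
      have s2: "sqrt 2 * sqrt 2 = (2::real)" by simp
      note loc = local_poly_T2[where q="sqrt 2" and e="Eb 1" and E=Eb, OF s2 refl Eb_vals pm]
      have loc': "complex_of_real (exp (Zx a b X \<tau> \<rho>) * (((sqrt 2 - 1) * \<tau> (X-1) + \<tau> X) * Eb (2 * \<rho> X * \<tau> X - \<tau> (X-1) * \<tau> X)))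
        = complex_of_real (exp (Zx a b X \<tau> \<rho>) * ((1 - sqrt 2) * ((1 + sqrt 2) * \<rho> X + \<rho> (X+1)) * Eb (- (\<rho> X * \<rho> (X+1))) + sqrt 2 * ((sqrt 2 - 1) * \<rho> (X-1) + \<rho> X) * Eb (2 * \<rho> X * \<tau> X - \<rho> (X-1) * \<rho> X)))"
        using loc by simp
      have e1: "Tmat a b (flip a (X-1) \<tau>) \<rho> = complex_of_real (exp (Zx a b X \<tau> \<rho>) * Eb (2 * \<rho> X * \<tau> X - \<tau> (X - 1) * \<tau> X))"
        using T_flip_left_prev ts rs True assms by simp
      have e2: "Tmat a b \<tau> (flip a X \<rho>) = complex_of_real (exp (Zx a b X \<tau> \<rho>) * Eb (- (\<rho> X * \<rho> (X+1))))"
        using T_flip_right' ts rs True assms by simp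
      have e3: "Tmat a b \<tau> (flip a (X - 1) \<rho>) = complex_of_real (exp (Zx a b X \<tau> \<rho>) * Eb (2 * \<tau> X * \<rho> X - \<rho> (X - 1) * \<rho> X))"
        using T_flip_right_prev ts rs True assms by simp
      show ?thesis unfolding L R e1 e2 e3 using ts rs loc' by (simp add: algebra_simps sq_sq)
    qed
  qed
qed

lemma rel_Ta:
  assumes "a < b"
  shows "op_mult a b (Lop a b a (-(1+sq)) 1) (Tmat a b) = op_mult a b (Tmat a b) (Lop a b a (-(1+sq)) (-1))"
proof (intro ext)
  fix \<tau> \<rho>
  have Xb: "a \<le> b" using assms by auto
  have L: "op_mult a b (Lop a b a (-(1+sq)) 1) (Tmat a b) \<tau> \<rho> =
     (if \<tau> \<in> configs a b then ((1+sq) * of_int (\<tau> a) + of_int (\<tau> (a+1))) * Tmat a b (flip a a \<tau>) \<rho> else 0)"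
  proof -
    have "flip a a \<tau> a = - \<tau> a" "flip a a \<tau> (a+1) = \<tau> (a+1)" by (auto simp: flip_def)
    thus ?thesis unfolding Lop_def mult_mono_left[OF Xb] by (simp add: algebra_simps)
  qed
  have R: "op_mult a b (Tmat a b) (Lop a b a (-(1+sq)) (-1)) \<tau> \<rho>
     = (if \<rho> \<in> configs a b then Tmat a b \<tau> (flip a a \<rho>) * (- (1+sq) * of_int (\<rho> a) - of_int (\<rho> (a+1))) else 0)"
    unfolding Lop_def mult_mono_right[OF Xb] by simp
  show "op_mult a b (Lop a b a (-(1+sq)) 1) (Tmat a b) \<tau> \<rho> = op_mult a b (Tmat a b) (Lop a b a (-(1+sq)) (-1)) \<tau> \<rho>"
  proof (cases "\<tau> \<in> configs a b \<and> \<rho> \<in> configs a b")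
    case False
    thus ?thesis unfolding L R by (auto simp: T_zero_left T_zero_right)
  next
    case True
    hence ts: "\<tau> \<in> configs a b" and rs: "\<rho> \<in> configs a b" by auto
    show ?thesis
    proof (cases "\<tau> a = - \<rho> a \<and> \<tau> b = \<rho> b")
      case False
      thus ?thesis unfolding L R using assms ts rs
        by (simp add: T_flip_zero_left T_flip_zero_right)
    next
      case True
      have pm: "\<tau> a = 1 \<or> \<tau> a = -1" "\<tau> (a+1) = 1 \<or> \<tau> (a+1) = -1"
        "\<rho> a = - \<tau> a" "\<rho> (a+1) = 1 \<or> \<rho> (a+1) = -1"
        using in_configs_pm[OF ts, of a] in_configs_pm[OF ts, of "a+1"] in_configs_pm[OF rs, of "a+1"] assms True by auto
      have s2: "sqrt 2 * sqrt 2 = (2::real)" by simp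
      note loc = local_poly_Ta[where q="sqrt 2" and e="Eb 1" and E=Eb, OF s2 refl Eb_vals(1) pm]
      have loc': "complex_of_real (exp (Zx a b a \<tau> \<rho>) * (((1 + sqrt 2) * \<tau> a + \<tau> (a+1)) * Eb (- (\<tau> a * \<tau> (a+1)))))
        = complex_of_real (exp (Zx a b a \<tau> \<rho>) * ((- (1 + sqrt 2) * \<rho> a - \<rho> (a+1)) * Eb (- (\<rho> a * \<rho> (a+1)))))"
        using loc by simp
      have e1: "Tmat a b (flip a a \<tau>) \<rho> = complex_of_real (exp (Zx a b a \<tau> \<rho>) * Eb (- (\<tau> a * \<tau> (a+1))))"
        using T_flip_left' ts rs True assms by simp
      have e2: "Tmat a b \<tau> (flip a a \<rho>) = complex_of_real (exp (Zx a b a \<tau> \<rho>) * Eb (- (\<rho> a * \<rho> (a+1))))"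
        using T_flip_right' ts rs True assms by simp
      show ?thesis unfolding L R e1 e2 using ts rs loc' by (simp add: algebra_simps sq_sq)
    qed
  qed
qed

lemma rel_Tb:
  assumes "a < b"
  shows "op_mult a b (Lop a b (b-1) (1-sq) 1) (Tmat a b) = op_mult a b (Tmat a b) (Lop a b (b-1) (sq-1) 1)"
proof (intro ext)
  fix \<tau> \<rho>
  have Xb: "b - 1 \<le> b" by auto
  have L: "op_mult a b (Lop a b (b-1) (1-sq) 1) (Tmat a b) \<tau> \<rho> =
     (if \<tau> \<in> configs a b then ((sq - 1) * of_int (\<tau> (b-1)) + of_int (\<tau> b)) * Tmat a b (flip a (b-1) \<tau>) \<rho> else 0)"
  proof -
    have "flip a (b-1) \<tau> (b-1) = - \<tau> (b-1)" "flip a (b-1) \<tau> b = \<tau> b" using assms by (auto simp: flip_def)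
    thus ?thesis unfolding Lop_def mult_mono_left[OF Xb] by (simp add: algebra_simps)
  qed
  have R: "op_mult a b (Tmat a b) (Lop a b (b-1) (sq-1) 1) \<tau> \<rho>
     = (if \<rho> \<in> configs a b then Tmat a b \<tau> (flip a (b-1) \<rho>) * ((sq - 1) * of_int (\<rho> (b-1)) + of_int (\<rho> b)) else 0)"
    unfolding Lop_def mult_mono_right[OF Xb] by simp
  show "op_mult a b (Lop a b (b-1) (1-sq) 1) (Tmat a b) \<tau> \<rho> = op_mult a b (Tmat a b) (Lop a b (b-1) (sq-1) 1) \<tau> \<rho>"
  proof (cases "\<tau> \<in> configs a b \<and> \<rho> \<in> configs a b")
    case False
    thus ?thesis unfolding L R by (auto simp: T_zero_left T_zero_right)
  next
    case True
    hence ts: "\<tau> \<in> configs a b" and rs: "\<rho> \<in> configs a b" by auto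
    show ?thesis
    proof (cases "\<tau> a = - \<rho> a \<and> \<tau> b = \<rho> b")
      case False
      thus ?thesis unfolding L R using assms ts rs
        by (simp add: T_flip_zero_left T_flip_zero_right)
    next
      case True
      have pm: "\<tau> (b-1) = 1 \<or> \<tau> (b-1) = -1" "\<tau> b = 1 \<or> \<tau> b = -1"
        "\<rho> (b-1) = 1 \<or> \<rho> (b-1) = -1" "\<rho> b = \<tau> b"
        using in_configs_pm[OF ts] in_configs_pm[OF rs] assms True by auto
      have s2: "sqrt 2 * sqrt 2 = (2::real)" by simp
      note loc = local_poly_Tb[where q="sqrt 2" and e="Eb 1" and E=Eb, OF s2 refl Eb_vals(1) pm]
      have loc': "complex_of_real (exp (Zx a b (b-1) \<tau> \<rho>) * (((sqrt 2 - 1) * \<tau> (b-1) + \<tau> b) * Eb (- (\<tau> (b-1) * \<tau> b))))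
        = complex_of_real (exp (Zx a b (b-1) \<tau> \<rho>) * (((sqrt 2 - 1) * \<rho> (b-1) + \<rho> b) * Eb (- (\<rho> (b-1) * \<rho> b))))"
        using loc by simp
      have e1: "Tmat a b (flip a (b-1) \<tau>) \<rho> = complex_of_real (exp (Zx a b (b-1) \<tau> \<rho>) * Eb (- (\<tau> (b-1) * \<tau> b)))"
        using T_flip_left'[of a "b-1" b \<tau> \<rho>] ts rs True assms by simp
      have e2: "Tmat a b \<tau> (flip a (b-1) \<rho>) = complex_of_real (exp (Zx a b (b-1) \<tau> \<rho>) * Eb (- (\<rho> (b-1) * \<rho> b)))"
        using T_flip_right'[of a "b-1" b \<tau> \<rho>] ts rs True assms by simp
      show ?thesis unfolding L R e1 e2 using ts rs loc' by (simp add: algebra_simps sq_sq)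
    qed
  qed
qed



definition tf :: "int \<Rightarrow> int \<Rightarrow> int \<Rightarrow> int \<Rightarrow> int \<Rightarrow> complex" where
  "tf a b x s s' = (if (x = a \<or> x = b) \<and> s \<noteq> s' then 0 else complex_of_real (Eb (s * s')))"

definition mi :: "int \<Rightarrow> int \<Rightarrow> int \<Rightarrow> int \<Rightarrow> int \<Rightarrow> complex" where
  "mi a b x s s' = (if x = a \<or> x = b then (if s = s' then complex_of_real (Eb (-1)) else 0)
      else complex_of_real (of_int (s * s') * Eb (s * s') / 2))"

definition Tvi :: "int \<Rightarrow> int \<Rightarrow> op" where
  "Tvi a b = (\<lambda>\<tau> \<rho>. if \<tau> \<in> configs a b \<and> \<rho> \<in> configs a b then (\<Prod>x\<in>{a..b}. mi a b x (\<tau> x) (\<rho> x)) else 0)"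

definition Thi :: "int \<Rightarrow> int \<Rightarrow> op" where
  "Thi a b = (\<lambda>\<tau> \<rho>. if \<tau> = \<rho> \<and> \<rho> \<in> configs a b then inverse (hh a b \<rho>) else 0)"

definition Tinv :: "int \<Rightarrow> int \<Rightarrow> op" where
  "Tinv a b = op_mult a b (Thi a b) (op_mult a b (Tvi a b) (Thi a b))"

lemma Tv_prod:
  assumes "a < b" "\<tau> \<in> configs a b" "\<rho> \<in> configs a b"
  shows "Tv a b \<tau> \<rho> = (\<Prod>x\<in>{a..b}. tf a b x (\<tau> x) (\<rho> x))"
proof (cases "\<tau> a = \<rho> a \<and> \<tau> b = \<rho> b")
  case True
  have "(\<Prod>x\<in>{a..b}. tf a b x (\<tau> x) (\<rho> x)) = (\<Prod>x\<in>{a..b}. complex_of_real (exp (beta * real_of_int (\<rho> x * \<tau> x))))"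
    using True by (intro prod.cong refl) (auto simp: tf_def Eb_def mult.commute)
  also have "\<dots> = complex_of_real (exp (beta * (\<Sum>x=a..b. real_of_int (\<rho> x * \<tau> x))))"
    by (simp add: exp_sum sum_distrib_left)
  finally show ?thesis using True assms by (simp add: Tv_def)
next
  case False
  hence "\<exists>x\<in>{a..b}. tf a b x (\<tau> x) (\<rho> x) = 0" using assms by (auto simp: tf_def)
  hence "(\<Prod>x\<in>{a..b}. tf a b x (\<tau> x) (\<rho> x)) = 0" by (simp add: prod_zero_iff)
  thus ?thesis using False by (auto simp: Tv_def)
qed

lemma Eb_prods: "Eb 1 * Eb 1 = 1 + sqrt 2" "Eb (-1) * Eb (-1) = sqrt 2 - 1" "Eb 1 * Eb (-1) = 1" "Eb (-1) * Eb 1 = 1"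
proof -
  show "Eb 1 * Eb 1 = 1 + sqrt 2" by (rule Eb_11)
  show a: "Eb 1 * Eb (-1) = 1" using Eb_add[of 1 "-1"] Eb_0 by simp
  thus "Eb (-1) * Eb 1 = 1" by (simp add: mult.commute)
  have "Eb (-1) * Eb (-1) = (Eb 1 * Eb 1) * (sqrt 2 - 1) * (sqrt 2 - 1)" by (simp add: Eb_m1 algebra_simps)
  also have "\<dots> = ((1 + sqrt 2) * (sqrt 2 - 1)) * (sqrt 2 - 1)" by (simp add: Eb_11)
  also have "(1 + sqrt 2) * (sqrt 2 - 1) = (1::real)" by (simp add: algebra_simps)
  finally show "Eb (-1) * Eb (-1) = sqrt 2 - 1" by simp
qed

lemma factor_sum1:
  assumes "t = 1 \<or> t = -1" "r = 1 \<or> r = -1"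
  shows "tf a b x t 1 * mi a b x 1 r + tf a b x t (-1) * mi a b x (-1) r = (if t = r then 1 else 0)"
proof -
  have e: "complex_of_real (Eb 1) * complex_of_real (Eb 1) = 1 + sq"
          "complex_of_real (Eb (-1)) * complex_of_real (Eb (-1)) = sq - 1"
          "complex_of_real (Eb 1) * complex_of_real (Eb (-1)) = 1"
          "complex_of_real (Eb (-1)) * complex_of_real (Eb 1) = 1"
    using Eb_prods by (metis of_real_mult of_real_add of_real_diff of_real_1)+
  show ?thesis using assms
    by (elim disjE) (auto simp: tf_def mi_def e field_simps)
qed

lemma factor_sum2:
  assumes "t = 1 \<or> t = -1" "r = 1 \<or> r = -1"
  shows "mi a b x t 1 * tf a b x 1 r + mi a b x t (-1) * tf a b x (-1) r = (if t = r then 1 else 0)"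
proof -
  have e: "complex_of_real (Eb 1) * complex_of_real (Eb 1) = 1 + sq"
          "complex_of_real (Eb (-1)) * complex_of_real (Eb (-1)) = sq - 1"
          "complex_of_real (Eb 1) * complex_of_real (Eb (-1)) = 1"
          "complex_of_real (Eb (-1)) * complex_of_real (Eb 1) = 1"
    using Eb_prods by (metis of_real_mult of_real_add of_real_diff of_real_1)+
  show ?thesis using assms
    by (elim disjE) (auto simp: tf_def mi_def e field_simps)
qed

lemma configs_eq:
  assumes "\<tau> \<in> configs a b" "\<rho> \<in> configs a b"
  shows "(\<forall>x\<in>{a..b}. \<tau> x = \<rho> x) \<longleftrightarrow> \<tau> = \<rho>"
  using assms by (auto simp: configs_def fun_eq_iff)

lemma prod_indicator:
  assumes "finite A"
  shows "(\<Prod>x\<in>A. (if P x then 1 else 0 :: complex)) = (if \<forall>x\<in>A. P x then 1 else 0)"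
  using assms by (induction A rule: finite_induct) auto

lemma Tv_Tvi:
  assumes "a < b"
  shows "op_mult a b (Tv a b) (Tvi a b) = op_id a b"
proof (intro ext)
  fix \<tau> \<rho>
  show "op_mult a b (Tv a b) (Tvi a b) \<tau> \<rho> = op_id a b \<tau> \<rho>"
  proof (cases "\<tau> \<in> configs a b \<and> \<rho> \<in> configs a b")
    case False
    thus ?thesis by (auto simp: op_mult_def op_id_def Tv_def Tvi_def)
  next
    case True
    have "op_mult a b (Tv a b) (Tvi a b) \<tau> \<rho> = (\<Sum>\<sigma>\<in>configs a b. \<Prod>x\<in>{a..b}. tf a b x (\<tau> x) (\<sigma> x) * mi a b x (\<sigma> x) (\<rho> x))"
      unfolding op_mult_def using True assms
      by (intro sum.cong refl) (simp add: Tv_prod Tvi_def prod.distrib)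
    also have "\<dots> = (\<Prod>x\<in>{a..b}. tf a b x (\<tau> x) 1 * mi a b x 1 (\<rho> x) + tf a b x (\<tau> x) (-1) * mi a b x (-1) (\<rho> x))"
      by (rule sum_prod_configs)
    also have "\<dots> = (\<Prod>x\<in>{a..b}. if \<tau> x = \<rho> x then 1 else 0)"
      using True by (intro prod.cong refl factor_sum1) (auto simp: configs_def)
    also have "\<dots> = op_id a b \<tau> \<rho>"
      using True configs_eq[of \<tau> a b \<rho>] by (simp add: prod_indicator op_id_def)
    finally show ?thesis .
  qed
qed

lemma Tvi_Tv:
  assumes "a < b"
  shows "op_mult a b (Tvi a b) (Tv a b) = op_id a b"
proof (intro ext)
  fix \<tau> \<rho>
  show "op_mult a b (Tvi a b) (Tv a b) \<tau> \<rho> = op_id a b \<tau> \<rho>"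
  proof (cases "\<tau> \<in> configs a b \<and> \<rho> \<in> configs a b")
    case False
    thus ?thesis by (auto simp: op_mult_def op_id_def Tv_def Tvi_def)
  next
    case True
    have "op_mult a b (Tvi a b) (Tv a b) \<tau> \<rho> = (\<Sum>\<sigma>\<in>configs a b. \<Prod>x\<in>{a..b}. mi a b x (\<tau> x) (\<sigma> x) * tf a b x (\<sigma> x) (\<rho> x))"
      unfolding op_mult_def using True assms
      by (intro sum.cong refl) (simp add: Tv_prod Tvi_def prod.distrib)
    also have "\<dots> = (\<Prod>x\<in>{a..b}. mi a b x (\<tau> x) 1 * tf a b x 1 (\<rho> x) + mi a b x (\<tau> x) (-1) * tf a b x (-1) (\<rho> x))"
      by (rule sum_prod_configs)
    also have "\<dots> = (\<Prod>x\<in>{a..b}. if \<tau> x = \<rho> x then 1 else 0)"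
      using True by (intro prod.cong refl factor_sum2) (auto simp: configs_def)
    also have "\<dots> = op_id a b \<tau> \<rho>"
      using True configs_eq[of \<tau> a b \<rho>] by (simp add: prod_indicator op_id_def)
    finally show ?thesis .
  qed
qed

lemma hh_nz: "hh a b \<rho> \<noteq> 0" by (simp add: hh_def)

lemma Th_Thi: "op_mult a b (Th_half a b) (Thi a b) = op_id a b"
  by (intro ext) (auto simp: mult_Th_left Thi_def op_id_def hh_nz)

lemma Thi_Th: "op_mult a b (Thi a b) (Th_half a b) = op_id a b"
  by (intro ext) (auto simp: mult_Th_right Thi_def op_id_def hh_nz)

lemma supp_Th: "op_supported a b (Th_half a b)" by (auto simp: op_supported_def Th_half_def)
lemma supp_Thi: "op_supported a b (Thi a b)" by (auto simp: op_supported_def Thi_def)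
lemma supp_Tv: "op_supported a b (Tv a b)" by (auto simp: op_supported_def Tv_def)
lemma supp_Tvi: "op_supported a b (Tvi a b)" by (auto simp: op_supported_def Tvi_def)
lemma supp_T: "op_supported a b (Tmat a b)"
  unfolding Tmat_def by (intro op_supported_mult supp_Th supp_Tv)
lemma supp_Tinv: "op_supported a b (Tinv a b)"
  unfolding Tinv_def by (intro op_supported_mult supp_Thi supp_Tvi)

lemma T_Tinv:
  assumes "a < b"
  shows "op_mult a b (Tmat a b) (Tinv a b) = op_id a b"
proof -
  have "op_mult a b (Tmat a b) (Tinv a b) =
     op_mult a b (Th_half a b) (op_mult a b (Tv a b) (op_mult a b (op_mult a b (Th_half a b) (Thi a b)) (op_mult a b (Tvi a b) (Thi a b))))"
    unfolding Tmat_def Tinv_def by (simp add: op_mult_assoc)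
  also have "\<dots> = op_mult a b (Th_half a b) (op_mult a b (op_mult a b (Tv a b) (Tvi a b)) (Thi a b))"
    by (simp add: Th_Thi op_mult_id_left op_supported_mult supp_Tvi supp_Thi op_mult_assoc)
  also have "\<dots> = op_id a b"
    by (simp add: Tv_Tvi[OF assms] op_mult_id_left supp_Thi Th_Thi)
  finally show ?thesis .
qed

lemma Tinv_T:
  assumes "a < b"
  shows "op_mult a b (Tinv a b) (Tmat a b) = op_id a b"
proof -
  have "op_mult a b (Tinv a b) (Tmat a b) =
     op_mult a b (Thi a b) (op_mult a b (Tvi a b) (op_mult a b (op_mult a b (Thi a b) (Th_half a b)) (op_mult a b (Tv a b) (Th_half a b))))"
    unfolding Tmat_def Tinv_def by (simp add: op_mult_assoc)
  also have "\<dots> = op_mult a b (Thi a b) (op_mult a b (op_mult a b (Tvi a b) (Tv a b)) (Th_half a b))"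
    by (simp add: Thi_Th op_mult_id_left op_supported_mult supp_Tv supp_Th op_mult_assoc)
  also have "\<dots> = op_id a b"
    by (simp add: Tvi_Tv[OF assms] op_mult_id_left supp_Th Thi_Th)
  finally show ?thesis .
qed

lemma op_inv_T:
  assumes "a < b"
  shows "op_inv a b (Tmat a b) = Tinv a b"
  unfolding op_inv_def
proof (rule the_equality)
  show "op_supported a b (Tinv a b) \<and> op_mult a b (Tinv a b) (Tmat a b) = op_id a b \<and> op_mult a b (Tmat a b) (Tinv a b) = op_id a b"
    using supp_Tinv Tinv_T[OF assms] T_Tinv[OF assms] by simp
next
  fix N assume N: "op_supported a b N \<and> op_mult a b N (Tmat a b) = op_id a b \<and> op_mult a b (Tmat a b) N = op_id a b"
  have "N = op_mult a b N (op_id a b)" using N by (simp add: op_mult_id_right)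
  also have "\<dots> = op_mult a b (op_mult a b N (Tmat a b)) (Tinv a b)" by (simp add: T_Tinv[OF assms] op_mult_assoc)
  also have "\<dots> = Tinv a b" using N by (simp add: op_mult_id_left supp_Tinv)
  finally show "N = Tinv a b" .
qed



definition sandw :: "int \<Rightarrow> int \<Rightarrow> op \<Rightarrow> op \<Rightarrow> op \<Rightarrow> op" where
  "sandw a b L R X = op_mult a b L (op_mult a b X R)"

lemma sandw_lin:
  "sandw a b L R (\<lambda>\<tau> \<rho>. c1 * A \<tau> \<rho> + c2 * B \<tau> \<rho>) = (\<lambda>\<tau> \<rho>. c1 * sandw a b L R A \<tau> \<rho> + c2 * sandw a b L R B \<tau> \<rho>)"
proof -
  have "op_mult a b (\<lambda>\<tau> \<rho>. c1 * A \<tau> \<rho> + c2 * B \<tau> \<rho>) R = (\<lambda>\<tau> \<rho>. c1 * op_mult a b A R \<tau> \<rho> + c2 * op_mult a b B R \<tau> \<rho>)"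
    by (intro ext) (rule op_mult_lin_left)
  thus ?thesis unfolding sandw_def by (intro ext) (simp add: op_mult_lin_right)
qed

lemma op_mult_sum_right:
  "op_mult a b M (\<lambda>\<tau> \<rho>. \<Sum>k\<in>K. G k \<tau> \<rho>) = (\<lambda>\<tau> \<rho>. \<Sum>k\<in>K. op_mult a b M (G k) \<tau> \<rho>)"
  unfolding op_mult_def by (intro ext) (simp add: sum_distrib_left sum.swap[of _ K])

lemma op_mult_sum_left:
  "op_mult a b (\<lambda>\<tau> \<rho>. \<Sum>k\<in>K. G k \<tau> \<rho>) M = (\<lambda>\<tau> \<rho>. \<Sum>k\<in>K. op_mult a b (G k) M \<tau> \<rho>)"
  unfolding op_mult_def by (intro ext) (simp add: sum_distrib_right sum.swap[of _ K])

lemma sandw_sum: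
  "sandw a b L R (\<lambda>\<tau> \<rho>. \<Sum>k\<in>K. G k \<tau> \<rho>) = (\<lambda>\<tau> \<rho>. \<Sum>k\<in>K. sandw a b L R (G k) \<tau> \<rho>)"
  unfolding sandw_def op_mult_sum_left op_mult_sum_right ..

lemma CG_zero: "(\<lambda>\<tau> \<rho>. 0) \<in> CliffGen a b"
  unfolding CliffGen_def by (rule CollectI, rule exI[of _ "\<lambda>_. 0"], rule exI[of _ "\<lambda>_. 0"]) simp

lemma CG_lin:
  assumes "A \<in> CliffGen a b" "B \<in> CliffGen a b"
  shows "(\<lambda>\<tau> \<rho>. c1 * A \<tau> \<rho> + c2 * B \<tau> \<rho>) \<in> CliffGen a b"
proof -
  obtain cA dA where A: "A = (\<lambda>\<tau> \<rho>. \<Sum>k=a..b-1. cA k * psi0 a b k \<tau> \<rho> + dA k * psi0_star a b k \<tau> \<rho>)"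
    using assms(1) unfolding CliffGen_def by blast
  obtain cB dB where B: "B = (\<lambda>\<tau> \<rho>. \<Sum>k=a..b-1. cB k * psi0 a b k \<tau> \<rho> + dB k * psi0_star a b k \<tau> \<rho>)"
    using assms(2) unfolding CliffGen_def by blast
  show ?thesis unfolding CliffGen_def
    apply (rule CollectI, rule exI[of _ "\<lambda>k. c1 * cA k + c2 * cB k"], rule exI[of _ "\<lambda>k. c1 * dA k + c2 * dB k"])
    by (auto simp: A B fun_eq_iff sum_distrib_left sum.distrib[symmetric] algebra_simps intro!: sum.cong)
qed

lemma CG_sum:
  assumes "finite K" "\<And>k. k \<in> K \<Longrightarrow> G k \<in> CliffGen a b"
  shows "(\<lambda>\<tau> \<rho>. \<Sum>k\<in>K. G k \<tau> \<rho>) \<in> CliffGen a b"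
  using assms
proof (induction K rule: finite_induct)
  case empty thus ?case using CG_zero by simp
next
  case (insert x F)
  have "(\<lambda>\<tau> \<rho>. 1 * G x \<tau> \<rho> + 1 * (\<Sum>k\<in>F. G k \<tau> \<rho>)) \<in> CliffGen a b"
    using insert by (intro CG_lin) auto
  thus ?case using insert by simp
qed

lemma CG_psi0: "a \<le> k \<Longrightarrow> k \<le> b - 1 \<Longrightarrow> psi0 a b k \<in> CliffGen a b"
  unfolding CliffGen_def
  apply (rule CollectI, rule exI[of _ "\<lambda>j. if j = k then 1 else 0"], rule exI[of _ "\<lambda>_. 0"])
proof (intro ext)
  fix \<tau> \<rho> assume "a \<le> k" "k \<le> b - 1"
  have "(\<Sum>j=a..b-1. (if j = k then 1 else 0) * psi0 a b j \<tau> \<rho> + 0 * psi0_star a b j \<tau> \<rho>) = (\<Sum>j=a..b-1. if j = k then psi0 a b j \<tau> \<rho> else 0)"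
    by (intro sum.cong) auto
  also have "\<dots> = psi0 a b k \<tau> \<rho>" using \<open>a \<le> k\<close> \<open>k \<le> b - 1\<close> by simp
  finally show "psi0 a b k \<tau> \<rho> = (\<Sum>j=a..b-1. (if j = k then 1 else 0) * psi0 a b j \<tau> \<rho> + 0 * psi0_star a b j \<tau> \<rho>)" by simp
qed

lemma CG_psi0_star: "a \<le> k \<Longrightarrow> k \<le> b - 1 \<Longrightarrow> psi0_star a b k \<in> CliffGen a b"
  unfolding CliffGen_def
  apply (rule CollectI, rule exI[of _ "\<lambda>_. 0"], rule exI[of _ "\<lambda>j. if j = k then 1 else 0"])
proof (intro ext)
  fix \<tau> \<rho> assume "a \<le> k" "k \<le> b - 1"
  have "(\<Sum>j=a..b-1. 0 * psi0 a b j \<tau> \<rho> + (if j = k then 1 else 0) * psi0_star a b j \<tau> \<rho>) = (\<Sum>j=a..b-1. if j = k then psi0_star a b j \<tau> \<rho> else 0)"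
    by (intro sum.cong) auto
  also have "\<dots> = psi0_star a b k \<tau> \<rho>" using \<open>a \<le> k\<close> \<open>k \<le> b - 1\<close> by simp
  finally show "psi0_star a b k \<tau> \<rho> = (\<Sum>j=a..b-1. 0 * psi0 a b j \<tau> \<rho> + (if j = k then 1 else 0) * psi0_star a b j \<tau> \<rho>)" by simp
qed

lemma sq_nz: "sq \<noteq> 0" by simp

lemma psi0_Lop: "psi0 a b k = Lop a b k (-1 / sq) (\<i> / sq)"
  unfolding psi0_def Lop_def mono_def by (intro ext) (simp add: field_simps)

lemma psi0_star_Lop: "psi0_star a b k = Lop a b k (-\<i> / sq) (1 / sq)"
  unfolding psi0_star_def Lop_def mono_def by (intro ext) (simp add: field_simps)

lemma div_sq_sq: "x / sq * (y / sq) = x * y / 2"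
  by (metis sq_sq(1) times_divide_times_eq)

lemma ii: "\<i> * (\<i> * x) = - x" by (simp add: mult.assoc[symmetric])

lemma Lop_comb:
  "c1 * Lop a b k \<alpha>1 \<gamma>1 \<tau> \<rho> + c2 * Lop a b k \<alpha>2 \<gamma>2 \<tau> \<rho> = Lop a b k (c1 * \<alpha>1 + c2 * \<alpha>2) (c1 * \<gamma>1 + c2 * \<gamma>2) \<tau> \<rho>"
  unfolding Lop_def mono_def by (simp add: algebra_simps)

lemma CG_Lop:
  assumes "a \<le> k" "k \<le> b - 1"
  shows "Lop a b k \<alpha> \<gamma> \<in> CliffGen a b"
proof -
  have "Lop a b k \<alpha> \<gamma> = (\<lambda>\<tau> \<rho>. (- (\<alpha> + \<i> * \<gamma>) / sq) * psi0 a b k \<tau> \<rho> + ((\<gamma> + \<i> * \<alpha>) / sq) * psi0_star a b k \<tau> \<rho>)"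
    unfolding psi0_Lop psi0_star_Lop Lop_comb
  proof (intro ext, rule arg_cong2[where f="\<lambda>x y. Lop a b k x y _ _"])
    fix \<tau> :: spin
    show "\<alpha> = - (\<alpha> + \<i> * \<gamma>) / sq * (- 1 / sq) + (\<gamma> + \<i> * \<alpha>) / sq * (- \<i> / sq)"
      unfolding div_sq_sq by (simp add: ii field_simps)
    show "\<gamma> = - (\<alpha> + \<i> * \<gamma>) / sq * (\<i> / sq) + (\<gamma> + \<i> * \<alpha>) / sq * (1 / sq)"
      unfolding div_sq_sq by (simp add: ii field_simps)
  qed
  thus ?thesis using assms by (simp only:) (intro CG_lin CG_psi0 CG_psi0_star; simp)
qed

lemma supp_mono: "k \<le> b \<Longrightarrow> op_supported a b (mono a b k f)"
  unfolding op_supported_def mono_def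
proof (intro allI impI)
  fix \<tau> \<rho> assume k: "k \<le> b" and h: "\<tau> \<notin> configs a b \<or> \<rho> \<notin> configs a b"
  show "(if \<rho> \<in> configs a b \<and> \<tau> = flip a k \<rho> then f \<rho> else 0) = 0"
  proof (cases "\<rho> \<in> configs a b \<and> \<tau> = flip a k \<rho>")
    case True thus ?thesis using h flip_in[OF _ k, of \<rho> a] by auto
  qed auto
qed

lemma supp_Lop: "k \<le> b \<Longrightarrow> op_supported a b (Lop a b k \<alpha> \<gamma>)"
  unfolding Lop_def by (rule supp_mono)

lemma supp_lin: "op_supported a b A \<Longrightarrow> op_supported a b B \<Longrightarrow> op_supported a b (\<lambda>\<tau> \<rho>. c1 * A \<tau> \<rho> + c2 * B \<tau> \<rho>)"
  unfolding op_supported_def by auto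

lemma supp_sum: "(\<And>k. k \<in> K \<Longrightarrow> op_supported a b (G k)) \<Longrightarrow> op_supported a b (\<lambda>\<tau> \<rho>. \<Sum>k\<in>K. G k \<tau> \<rho>)"
  unfolding op_supported_def by auto

lemma supp_CG:
  assumes "X \<in> CliffGen a b"
  shows "op_supported a b X"
proof -
  obtain c d where X: "X = (\<lambda>\<tau> \<rho>. \<Sum>k=a..b-1. c k * psi0 a b k \<tau> \<rho> + d k * psi0_star a b k \<tau> \<rho>)"
    using assms unfolding CliffGen_def by blast
  show ?thesis unfolding X psi0_Lop psi0_star_Lop
    by (intro supp_sum supp_lin supp_Lop) auto
qed

lemma sandw_CG:
  assumes "\<And>k \<alpha> \<gamma>. a \<le> k \<Longrightarrow> k \<le> b - 1 \<Longrightarrow> sandw a b L R (Lop a b k \<alpha> \<gamma>) \<in> CliffGen a b"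
  and "X \<in> CliffGen a b"
  shows "sandw a b L R X \<in> CliffGen a b"
proof -
  obtain c d where X: "X = (\<lambda>\<tau> \<rho>. \<Sum>k=a..b-1. c k * psi0 a b k \<tau> \<rho> + d k * psi0_star a b k \<tau> \<rho>)"
    using assms(2) unfolding CliffGen_def by blast
  show ?thesis unfolding X sandw_sum sandw_lin
    by (intro CG_sum CG_lin) (auto simp: psi0_Lop psi0_star_Lop intro: assms(1))
qed



lemma rel_to_F:
  assumes "a < b" "op_mult a b U (Tmat a b) = op_mult a b (Tmat a b) Y" "op_supported a b Y"
  shows "sandw a b (Tinv a b) (Tmat a b) U = Y"
  unfolding sandw_def assms(2) op_mult_assoc[symmetric] Tinv_T[OF assms(1)] op_mult_id_left[OF assms(3)] ..

lemma rel_to_B: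
  assumes "a < b" "op_mult a b U (Tmat a b) = op_mult a b (Tmat a b) Y" "op_supported a b U"
  shows "sandw a b (Tmat a b) (Tinv a b) Y = U"
  unfolding sandw_def op_mult_assoc[symmetric] assms(2)[symmetric]
  unfolding op_mult_assoc T_Tinv[OF assms(1)] op_mult_id_right[OF assms(3)] ..

lemma Lop_eq: "\<alpha> = \<alpha>' \<Longrightarrow> \<gamma> = \<gamma>' \<Longrightarrow> Lop a b k \<alpha> \<gamma> \<tau> \<rho> = Lop a b k \<alpha>' \<gamma>' \<tau> \<rho>" by simp

lemma Lop_UW:
  "Lop a b k \<alpha> \<gamma> = (\<lambda>\<tau> \<rho>. (((1 - sq) * \<gamma> - \<alpha>) / 2) * Lop a b k (-(1+sq)) 1 \<tau> \<rho> + ((\<alpha> + (1 + sq) * \<gamma>) / 2) * Lop a b k (1 - sq) 1 \<tau> \<rho>)"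
  unfolding Lop_comb
  by (intro ext Lop_eq) (simp_all add: field_simps algebra_simps sq_sq)

lemma Lop_RL:
  "Lop a b k \<alpha> \<gamma> = (\<lambda>\<tau> \<rho>. ((\<alpha> - (sq - 1) * \<gamma>) / 2) * Lop a b k (1+sq) 1 \<tau> \<rho> + (((1 + sq) * \<gamma> - \<alpha>) / 2) * Lop a b k (sq - 1) 1 \<tau> \<rho>)"
  unfolding Lop_comb
  by (intro ext Lop_eq) (simp_all add: field_simps algebra_simps sq_sq)

lemma CG_F:
  assumes "a < b" "a \<le> k" "k \<le> b - 1"
  shows "sandw a b (Tinv a b) (Tmat a b) (Lop a b k \<alpha> \<gamma>) \<in> CliffGen a b"
proof -
  have FU: "sandw a b (Tinv a b) (Tmat a b) (Lop a b k (-(1+sq)) 1) \<in> CliffGen a b"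
  proof (cases "k = a")
    case True
    have "sandw a b (Tinv a b) (Tmat a b) (Lop a b k (-(1+sq)) 1) = Lop a b a (-(1+sq)) (-1)"
      using rel_to_F[OF assms(1) rel_Ta[OF assms(1)] supp_Lop] True assms by simp
    thus ?thesis using assms True by (simp add: CG_Lop)
  next
    case False
    have "sandw a b (Tinv a b) (Tmat a b) (Lop a b k (-(1+sq)) 1) =
      (\<lambda>\<tau> \<rho>. - sq * Lop a b k (1+sq) 1 \<tau> \<rho> + (1+sq) * Lop a b (k-1) (sq-1) 1 \<tau> \<rho>)"
      using False assms by (intro rel_to_F rel_T1 supp_lin supp_Lop) auto
    thus ?thesis using assms False by (simp only:) (intro CG_lin CG_Lop; simp)
  qed
  have FW: "sandw a b (Tinv a b) (Tmat a b) (Lop a b k (1 - sq) 1) \<in> CliffGen a b"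
  proof (cases "k = b - 1")
    case True
    have "sandw a b (Tinv a b) (Tmat a b) (Lop a b k (1 - sq) 1) = Lop a b (b-1) (sq-1) 1"
      using rel_to_F[OF assms(1) rel_Tb[OF assms(1)] supp_Lop] True by simp
    thus ?thesis using assms True by (simp add: CG_Lop)
  next
    case False
    have "sandw a b (Tinv a b) (Tmat a b) (Lop a b ((k+1)-1) (1 - sq) 1) =
      (\<lambda>\<tau> \<rho>. (1 - sq) * Lop a b (k+1) (1+sq) 1 \<tau> \<rho> + sq * Lop a b ((k+1)-1) (sq-1) 1 \<tau> \<rho>)"
      using False assms by (intro rel_to_F rel_T2 supp_lin supp_Lop) auto
    moreover have kk: "k + 1 - 1 = k" by simp
    ultimately show ?thesis using assms False unfolding kk by (simp only:) (intro CG_lin CG_Lop; simp)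
  qed
  show ?thesis
    by (subst Lop_UW, unfold sandw_lin) (rule CG_lin[OF FU FW])
qed

lemma CG_B:
  assumes "a < b" "a \<le> k" "k \<le> b - 1"
  shows "sandw a b (Tmat a b) (Tinv a b) (Lop a b k \<alpha> \<gamma>) \<in> CliffGen a b"
proof -
  have BR: "sandw a b (Tmat a b) (Tinv a b) (Lop a b k (1+sq) 1) \<in> CliffGen a b"
  proof (cases "k = a")
    case True
    have e: "sandw a b (Tmat a b) (Tinv a b) (Lop a b a (-(1+sq)) (-1)) = Lop a b a (-(1+sq)) 1"
      using rel_to_B[OF assms(1) rel_Ta[OF assms(1)] supp_Lop] assms by simp
    have "Lop a b k (1+sq) 1 = (\<lambda>\<tau> \<rho>. (-1) * Lop a b a (-(1+sq)) (-1) \<tau> \<rho> + 0 * Lop a b a (-(1+sq)) (-1) \<tau> \<rho>)"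
      unfolding Lop_comb True by (intro ext Lop_eq) simp_all
    hence "sandw a b (Tmat a b) (Tinv a b) (Lop a b k (1+sq) 1) = sandw a b (Tmat a b) (Tinv a b) (\<lambda>\<tau> \<rho>. (-1) * Lop a b a (-(1+sq)) (-1) \<tau> \<rho> + 0 * Lop a b a (-(1+sq)) (-1) \<tau> \<rho>)"
      by (rule arg_cong)
    also have "\<dots> = (\<lambda>\<tau> \<rho>. (-1) * sandw a b (Tmat a b) (Tinv a b) (Lop a b a (-(1+sq)) (-1)) \<tau> \<rho> + 0 * sandw a b (Tmat a b) (Tinv a b) (Lop a b a (-(1+sq)) (-1)) \<tau> \<rho>)" by (rule sandw_lin)
    also have "\<dots> =
        (\<lambda>\<tau> \<rho>. (-1) * Lop a b a (-(1+sq)) 1 \<tau> \<rho> + 0 * Lop a b a (-(1+sq)) 1 \<tau> \<rho>)"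
      by (simp only: e)
    finally have "sandw a b (Tmat a b) (Tinv a b) (Lop a b k (1+sq) 1) =
        (\<lambda>\<tau> \<rho>. (-1) * Lop a b a (-(1+sq)) 1 \<tau> \<rho> + 0 * Lop a b a (-(1+sq)) 1 \<tau> \<rho>)" .
    thus ?thesis using assms by (simp only:) (intro CG_lin CG_Lop; simp)
  next
    case False
    let ?Y1 = "\<lambda>\<tau> \<rho>. - sq * Lop a b k (1+sq) 1 \<tau> \<rho> + (1+sq) * Lop a b (k-1) (sq-1) 1 \<tau> \<rho>"
    let ?Y2 = "\<lambda>\<tau> \<rho>. (1 - sq) * Lop a b k (1+sq) 1 \<tau> \<rho> + sq * Lop a b (k-1) (sq-1) 1 \<tau> \<rho>"
    have e1: "sandw a b (Tmat a b) (Tinv a b) ?Y1 = Lop a b k (-(1+sq)) 1"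
      using False assms by (intro rel_to_B rel_T1 supp_Lop) auto
    have e2: "sandw a b (Tmat a b) (Tinv a b) ?Y2 = Lop a b (k-1) (1 - sq) 1"
      using False assms by (intro rel_to_B rel_T2 supp_Lop) auto
    have "Lop a b k (1+sq) 1 = (\<lambda>\<tau> \<rho>. (- sq) * ?Y1 \<tau> \<rho> + (1 + sq) * ?Y2 \<tau> \<rho>)"
      by (intro ext) (simp add: algebra_simps sq_sq)
    hence "sandw a b (Tmat a b) (Tinv a b) (Lop a b k (1+sq) 1) = sandw a b (Tmat a b) (Tinv a b) (\<lambda>\<tau> \<rho>. (- sq) * ?Y1 \<tau> \<rho> + (1 + sq) * ?Y2 \<tau> \<rho>)"
      by (rule arg_cong)
    also have "\<dots> = (\<lambda>\<tau> \<rho>. (- sq) * sandw a b (Tmat a b) (Tinv a b) ?Y1 \<tau> \<rho> + (1 + sq) * sandw a b (Tmat a b) (Tinv a b) ?Y2 \<tau> \<rho>)" by (rule sandw_lin)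
    also have "\<dots> =
       (\<lambda>\<tau> \<rho>. (- sq) * Lop a b k (-(1+sq)) 1 \<tau> \<rho> + (1 + sq) * Lop a b (k-1) (1 - sq) 1 \<tau> \<rho>)"
      by (simp only: e1 e2)
    finally have "sandw a b (Tmat a b) (Tinv a b) (Lop a b k (1+sq) 1) =
       (\<lambda>\<tau> \<rho>. (- sq) * Lop a b k (-(1+sq)) 1 \<tau> \<rho> + (1 + sq) * Lop a b (k-1) (1 - sq) 1 \<tau> \<rho>)" .
    thus ?thesis using assms False by (simp only:) (intro CG_lin CG_Lop; simp)
  qed
  have BL: "sandw a b (Tmat a b) (Tinv a b) (Lop a b k (sq - 1) 1) \<in> CliffGen a b"
  proof (cases "k = b - 1")
    case True
    have "sandw a b (Tmat a b) (Tinv a b) (Lop a b k (sq - 1) 1) = Lop a b (b-1) (1 - sq) 1"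
      using rel_to_B[OF assms(1) rel_Tb[OF assms(1)] supp_Lop] True by simp
    thus ?thesis using assms by (simp add: CG_Lop)
  next
    case False
    let ?Y1 = "\<lambda>\<tau> \<rho>. - sq * Lop a b (k+1) (1+sq) 1 \<tau> \<rho> + (1+sq) * Lop a b k (sq-1) 1 \<tau> \<rho>"
    let ?Y2 = "\<lambda>\<tau> \<rho>. (1 - sq) * Lop a b (k+1) (1+sq) 1 \<tau> \<rho> + sq * Lop a b k (sq-1) 1 \<tau> \<rho>"
    have e1: "sandw a b (Tmat a b) (Tinv a b) ?Y1 = Lop a b (k+1) (-(1+sq)) 1"
      using rel_to_B[OF assms(1) rel_T1[of a "k+1" b] supp_Lop] False assms by simp
    have e2: "sandw a b (Tmat a b) (Tinv a b) ?Y2 = Lop a b k (1 - sq) 1"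
      using rel_to_B[OF assms(1) rel_T2[of a "k+1" b] supp_Lop] False assms by simp
    have "Lop a b k (sq - 1) 1 = (\<lambda>\<tau> \<rho>. (1 - sq) * ?Y1 \<tau> \<rho> + sq * ?Y2 \<tau> \<rho>)"
      by (intro ext) (simp add: algebra_simps sq_sq)
    hence "sandw a b (Tmat a b) (Tinv a b) (Lop a b k (sq - 1) 1) = sandw a b (Tmat a b) (Tinv a b) (\<lambda>\<tau> \<rho>. (1 - sq) * ?Y1 \<tau> \<rho> + sq * ?Y2 \<tau> \<rho>)"
      by (rule arg_cong)
    also have "\<dots> = (\<lambda>\<tau> \<rho>. (1 - sq) * sandw a b (Tmat a b) (Tinv a b) ?Y1 \<tau> \<rho> + sq * sandw a b (Tmat a b) (Tinv a b) ?Y2 \<tau> \<rho>)" by (rule sandw_lin)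
    also have "\<dots> =
       (\<lambda>\<tau> \<rho>. (1 - sq) * Lop a b (k+1) (-(1+sq)) 1 \<tau> \<rho> + sq * Lop a b k (1 - sq) 1 \<tau> \<rho>)"
      by (simp only: e1 e2)
    finally have "sandw a b (Tmat a b) (Tinv a b) (Lop a b k (sq - 1) 1) =
       (\<lambda>\<tau> \<rho>. (1 - sq) * Lop a b (k+1) (-(1+sq)) 1 \<tau> \<rho> + sq * Lop a b k (1 - sq) 1 \<tau> \<rho>)" .
    thus ?thesis using assms False by (simp only:) (intro CG_lin CG_Lop; simp)
  qed
  show ?thesis
    by (subst Lop_RL, unfold sandw_lin) (rule CG_lin[OF BR BL])
qed

lemma CG_F_all: "a < b \<Longrightarrow> X \<in> CliffGen a b \<Longrightarrow> sandw a b (Tinv a b) (Tmat a b) X \<in> CliffGen a b"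
  by (rule sandw_CG) (auto intro: CG_F)

lemma CG_B_all: "a < b \<Longrightarrow> X \<in> CliffGen a b \<Longrightarrow> sandw a b (Tmat a b) (Tinv a b) X \<in> CliffGen a b"
  by (rule sandw_CG) (auto intro: CG_B)



definition conjT :: "int \<Rightarrow> int \<Rightarrow> int \<Rightarrow> op \<Rightarrow> op" where
  "conjT a b y = sandw a b (op_zpow a b (Tmat a b) (- y)) (op_zpow a b (Tmat a b) y)"

lemma pow_Suc: "op_pow a b M (Suc n) = op_mult a b M (op_pow a b M n)"
  by (simp add: op_pow_def)

lemma pow_0: "op_pow a b M 0 = op_id a b"
  by (simp add: op_pow_def)

lemma pow_supp: "op_supported a b M \<Longrightarrow> op_supported a b (op_pow a b M n)"
  by (induction n) (simp_all add: pow_0 pow_Suc op_supported_id op_supported_mult)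

lemma pow_comm: "op_supported a b M \<Longrightarrow> op_mult a b (op_pow a b M n) M = op_mult a b M (op_pow a b M n)"
proof (induction n)
  case 0 thus ?case by (simp add: pow_0 op_mult_id_left op_mult_id_right)
next
  case (Suc n)
  thus ?case by (simp add: pow_Suc op_mult_assoc)
qed

lemma zpow_pos: "op_zpow a b M (int n) = op_pow a b M n"
  by (simp add: op_zpow_def)

lemma zpow_neg: "a < b \<Longrightarrow> op_zpow a b (Tmat a b) (- int n) = op_pow a b (Tinv a b) n"
  by (cases "n = 0") (simp_all add: op_zpow_def op_inv_T pow_0)

lemma cancel_T_Tinv: "a < b \<Longrightarrow> op_supported a b Z \<Longrightarrow> op_mult a b (Tmat a b) (op_mult a b (Tinv a b) Z) = Z"
  by (simp add: op_mult_assoc[symmetric] T_Tinv op_mult_id_left)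

lemma cancel_Tinv_T: "a < b \<Longrightarrow> op_supported a b Z \<Longrightarrow> op_mult a b (Tinv a b) (op_mult a b (Tmat a b) Z) = Z"
  by (simp add: op_mult_assoc[symmetric] Tinv_T op_mult_id_left)

lemma conj_step:
  assumes ab: "a < b" and X: "op_supported a b X"
  shows "conjT a b (y + 1) X = conjT a b y (sandw a b (Tinv a b) (Tmat a b) X)"
proof (cases "y \<ge> 0")
  case True
  then obtain n where y: "y = int n" using nonneg_int_cases by blast
  let ?P = "op_pow a b (Tinv a b) n" and ?Q = "op_pow a b (Tmat a b) n"
  let ?Ti = "Tinv a b" and ?T = "Tmat a b"
  have e1: "- (int n + 1) = - int (Suc n)" "int n + 1 = int (Suc n)" by simp_all
  have c: "op_mult a b ?Ti ?P = op_mult a b ?P ?Ti" using pow_comm[OF supp_Tinv] by simp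
  have "conjT a b (y + 1) X = op_mult a b (op_mult a b ?Ti ?P) (op_mult a b X (op_mult a b ?T ?Q))"
    unfolding conjT_def y e1 zpow_pos zpow_neg[OF ab] sandw_def pow_Suc ..
  also have "\<dots> = op_mult a b (op_mult a b ?P ?Ti) (op_mult a b X (op_mult a b ?T ?Q))" by (simp only: c)
  also have "\<dots> = op_mult a b ?P (op_mult a b ?Ti (op_mult a b X (op_mult a b ?T ?Q)))" by (simp only: op_mult_assoc)
  also have "\<dots> = op_mult a b ?P (op_mult a b (op_mult a b ?Ti (op_mult a b X ?T)) ?Q)" by (simp only: op_mult_assoc)
  also have "\<dots> = conjT a b y (sandw a b (Tinv a b) (Tmat a b) X)"
    unfolding conjT_def y zpow_pos zpow_neg[OF ab] sandw_def ..
  finally show ?thesis .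
next
  case False
  then obtain m where y: "y = - int (Suc m)" using negD[of y] by auto
  let ?P = "op_pow a b (Tmat a b) m" and ?Q = "op_pow a b (Tinv a b) m"
  let ?Ti = "Tinv a b" and ?T = "Tmat a b"
  have e1: "- int (Suc m) + 1 = - int m" "- (- int (Suc m) + 1) = int m" "- (- int (Suc m)) = int (Suc m)" by simp_all
  have c: "op_mult a b ?T ?P = op_mult a b ?P ?T" using pow_comm[OF supp_T] by simp
  have sQ: "op_supported a b ?Q" by (intro pow_supp supp_Tinv)
  have s1: "op_supported a b (op_mult a b X (op_mult a b ?T (op_mult a b ?Ti ?Q)))"
    by (intro op_supported_mult X supp_T supp_Tinv sQ)
  have "conjT a b y (sandw a b (Tinv a b) (Tmat a b) X) =
     op_mult a b (op_mult a b ?T ?P) (op_mult a b (op_mult a b ?Ti (op_mult a b X ?T)) (op_mult a b ?Ti ?Q))"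
    unfolding conjT_def y e1 zpow_pos zpow_neg[OF ab] sandw_def pow_Suc ..
  also have "\<dots> = op_mult a b (op_mult a b ?P ?T) (op_mult a b (op_mult a b ?Ti (op_mult a b X ?T)) (op_mult a b ?Ti ?Q))"
    by (simp only: c)
  also have "\<dots> = op_mult a b ?P (op_mult a b ?T (op_mult a b ?Ti (op_mult a b X (op_mult a b ?T (op_mult a b ?Ti ?Q)))))"
    by (simp only: op_mult_assoc)
  also have "\<dots> = op_mult a b ?P (op_mult a b X (op_mult a b ?T (op_mult a b ?Ti ?Q)))"
    by (simp only: cancel_T_Tinv[OF ab s1])
  also have "\<dots> = op_mult a b ?P (op_mult a b X ?Q)"
    by (simp only: cancel_T_Tinv[OF ab sQ])
  also have "\<dots> = conjT a b (y + 1) X"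
    unfolding conjT_def y e1 minus_minus zpow_pos zpow_neg[OF ab] sandw_def ..
  finally show ?thesis ..
qed

lemma supp_sandw: "op_supported a b L \<Longrightarrow> op_supported a b R \<Longrightarrow> op_supported a b X \<Longrightarrow> op_supported a b (sandw a b L R X)"
  unfolding sandw_def by (intro op_supported_mult)

lemma conj_down:
  assumes ab: "a < b" and X: "op_supported a b X"
  shows "conjT a b (y - 1) X = conjT a b y (sandw a b (Tmat a b) (Tinv a b) X)"
proof -
  have s: "op_supported a b (sandw a b (Tmat a b) (Tinv a b) X)" by (intro supp_sandw supp_T supp_Tinv X)
  have "conjT a b y (sandw a b (Tmat a b) (Tinv a b) X) = conjT a b ((y - 1) + 1) (sandw a b (Tmat a b) (Tinv a b) X)" by simp
  also have "\<dots> = conjT a b (y - 1) (sandw a b (Tinv a b) (Tmat a b) (sandw a b (Tmat a b) (Tinv a b) X))"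
    by (rule conj_step[OF ab s])
  also have "sandw a b (Tinv a b) (Tmat a b) (sandw a b (Tmat a b) (Tinv a b) X) = X"
    unfolding sandw_def
    by (simp add: op_mult_assoc cancel_Tinv_T[OF ab] Tinv_T[OF ab] op_mult_id_right X supp_Tinv op_supported_mult)
  finally show ?thesis by simp
qed

lemma conj_0: "op_supported a b X \<Longrightarrow> conjT a b 0 X = X"
  unfolding conjT_def sandw_def op_zpow_def by (simp add: pow_0 op_mult_id_left op_mult_id_right)

lemma conj_lin: "conjT a b y (\<lambda>\<tau> \<rho>. c1 * A \<tau> \<rho> + c2 * B \<tau> \<rho>) = (\<lambda>\<tau> \<rho>. c1 * conjT a b y A \<tau> \<rho> + c2 * conjT a b y B \<tau> \<rho>)"
  unfolding conjT_def by (rule sandw_lin)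

lemma conj_CG:
  assumes ab: "a < b"
  shows "X \<in> CliffGen a b \<Longrightarrow> conjT a b y X \<in> CliffGen a b"
proof (induction y arbitrary: X rule: int_induct[where k=0])
  case base thus ?case using conj_0 supp_CG by simp
next
  case (step1 i)
  thus ?case using conj_step[OF ab supp_CG[OF step1.prems]] CG_F_all[OF ab step1.prems] by simp
next
  case (step2 i)
  thus ?case using conj_down[OF ab supp_CG[OF step2.prems]] CG_B_all[OF ab step2.prems] by simp
qed



definition "om = Complex (sqrt 2 / 2) (sqrt 2 / 2)"
definition "gRr = Complex (-1/2) (-1/2 + sqrt 2 / 2)"
definition "gLl = Complex (-1/2) (1/2 + sqrt 2 / 2)"
definition "gUr = Complex (1/2) (-1/2 + sqrt 2 / 2)"
definition "gUl = Complex (1/2) (1/2 + sqrt 2 / 2)"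
definition "cp1 = Complex (- sqrt 2 / 4) (-1/2 + sqrt 2 / 4)"
definition "cs1 = Complex (-1/2 + sqrt 2 / 4) (- sqrt 2 / 4)"
definition "cp2 = Complex (sqrt 2 / 4) (1/2 + sqrt 2 / 4)"
definition "cs2 = Complex (1/2 + sqrt 2 / 4) (sqrt 2 / 4)"
definition "cpa = Complex (-1 + sqrt 2 / 2) 0"
definition "csa = Complex 0 (-1 + sqrt 2 / 2)"
definition "cpb = Complex 0 (sqrt 2 / 2)"
definition "csb = Complex (sqrt 2 / 2) 0"

lemmas cdefs = om_def gRr_def gLl_def gUr_def gUl_def cp1_def cs1_def cp2_def cs2_def cpa_def csa_def cpb_def csb_def

lemma s2r: "sqrt 2 * sqrt 2 = (2::real)" "sqrt 2 * (sqrt 2 * x) = 2 * (x::real)"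
  by (simp_all add: mult.assoc[symmetric])

lemma const_eqs:
  "cp1 + (- om) * cs1 = gRr" "cp2 + (- om) * cs2 = 0" "cpa + (- om) * csa = gRr"
  "cp1 + (\<i> * om) * cs1 = 0" "cp2 + (\<i> * om) * cs2 = gLl" "cpb + (\<i> * om) * csb = gLl"
  "cp1 + (- \<i> * om) * cs1 = gUr * (- sq)" "cp2 + (- \<i> * om) * cs2 = gUr * (1 + sq)" "cpa + (- \<i> * om) * csa = gUr * (-1)"
  "cp1 + om * cs1 = gUl * (1 - sq)" "cp2 + om * cs2 = gUl * sq" "cpb + om * csb = gUl"
  "cpa + \<i> * csa = 0" "cpb + (- \<i>) * csb = 0"
  by (simp_all add: complex_eq_iff cdefs algebra_simps s2r)

lemma psi_lam:
  "psi0 a b k \<tau> \<rho> + l * psi0_star a b k \<tau> \<rho> = Lop a b k (-1/sq + l * (-\<i>/sq)) (\<i>/sq + l * (1/sq)) \<tau> \<rho>"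
  unfolding psi0_Lop psi0_star_Lop using Lop_comb[of 1 a b k _ _ \<tau> \<rho> l] by simp

lemma g_eqs:
  "-1/sq + (- om) * (-\<i>/sq) = gRr * (1 + sq)" "\<i>/sq + (- om) * (1/sq) = gRr"
  "-1/sq + (\<i> * om) * (-\<i>/sq) = gLl * (sq - 1)" "\<i>/sq + (\<i> * om) * (1/sq) = gLl"
  "-1/sq + (- \<i> * om) * (-\<i>/sq) = gUr * (- (1 + sq))" "\<i>/sq + (- \<i> * om) * (1/sq) = gUr"
  "-1/sq + om * (-\<i>/sq) = gUl * (1 - sq)" "\<i>/sq + om * (1/sq) = gUl"
  by (simp_all add: complex_eq_iff cdefs algebra_simps s2r field_simps)

lemma Lop_scale: "c * Lop a b k \<alpha> \<gamma> \<tau> \<rho> = Lop a b k (c * \<alpha>) (c * \<gamma>) \<tau> \<rho>"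
  unfolding Lop_def mono_def by (simp add: algebra_simps)

lemma psiRr: "psi0 a b k \<tau> \<rho> + (- om) * psi0_star a b k \<tau> \<rho> = gRr * Lop a b k (1+sq) 1 \<tau> \<rho>"
  unfolding psi_lam Lop_scale g_eqs by simp
lemma psiLl: "psi0 a b k \<tau> \<rho> + (\<i> * om) * psi0_star a b k \<tau> \<rho> = gLl * Lop a b k (sq-1) 1 \<tau> \<rho>"
  unfolding psi_lam Lop_scale g_eqs by simp
lemma psiUr: "psi0 a b k \<tau> \<rho> + (- \<i> * om) * psi0_star a b k \<tau> \<rho> = gUr * Lop a b k (-(1+sq)) 1 \<tau> \<rho>"
  unfolding psi_lam Lop_scale g_eqs by simp
lemma psiUl: "psi0 a b k \<tau> \<rho> + om * psi0_star a b k \<tau> \<rho> = gUl * Lop a b k (1-sq) 1 \<tau> \<rho>"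
  unfolding psi_lam Lop_scale g_eqs by simp

definition Pv :: "int \<Rightarrow> int \<Rightarrow> int \<Rightarrow> op" where
  "Pv a b X = (\<lambda>\<tau> \<rho>. if X = a then cpa * Lop a b a (1+sq) 1 \<tau> \<rho>
     else if X = b then cpb * Lop a b (b-1) (sq-1) 1 \<tau> \<rho>
     else cp1 * Lop a b X (1+sq) 1 \<tau> \<rho> + cp2 * Lop a b (X-1) (sq-1) 1 \<tau> \<rho>)"

definition Pvs :: "int \<Rightarrow> int \<Rightarrow> int \<Rightarrow> op" where
  "Pvs a b X = (\<lambda>\<tau> \<rho>. if X = a then csa * Lop a b a (1+sq) 1 \<tau> \<rho>
     else if X = b then csb * Lop a b (b-1) (sq-1) 1 \<tau> \<rho>
     else cs1 * Lop a b X (1+sq) 1 \<tau> \<rho> + cs2 * Lop a b (X-1) (sq-1) 1 \<tau> \<rho>)"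

lemma comb1: "p * A + l * (s * A) = (p + l * s) * (A::complex)"
  by (simp add: algebra_simps)
lemma comb2: "p1 * A + p2 * B + l * (s1 * A + s2 * B) = (p1 + l * s1) * A + (p2 + l * s2) * (B::complex)"
  by (simp add: algebra_simps)

lemma Pv_a: "Pv a b a \<tau> \<rho> = cpa * Lop a b a (1+sq) 1 \<tau> \<rho>" "Pvs a b a \<tau> \<rho> = csa * Lop a b a (1+sq) 1 \<tau> \<rho>"
  by (simp_all add: Pv_def Pvs_def)
lemma Pv_b: "a \<noteq> b \<Longrightarrow> Pv a b b \<tau> \<rho> = cpb * Lop a b (b-1) (sq-1) 1 \<tau> \<rho>"
  "a \<noteq> b \<Longrightarrow> Pvs a b b \<tau> \<rho> = csb * Lop a b (b-1) (sq-1) 1 \<tau> \<rho>"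
  by (simp_all add: Pv_def Pvs_def)
lemma Pv_i: "X \<noteq> a \<Longrightarrow> X \<noteq> b \<Longrightarrow> Pv a b X \<tau> \<rho> = cp1 * Lop a b X (1+sq) 1 \<tau> \<rho> + cp2 * Lop a b (X-1) (sq-1) 1 \<tau> \<rho>"
  "X \<noteq> a \<Longrightarrow> X \<noteq> b \<Longrightarrow> Pvs a b X \<tau> \<rho> = cs1 * Lop a b X (1+sq) 1 \<tau> \<rho> + cs2 * Lop a b (X-1) (sq-1) 1 \<tau> \<rho>"
  by (simp_all add: Pv_def Pvs_def)

lemma BotR:
  assumes "a \<le> X" "X < b"
  shows "psi0 a b X \<tau> \<rho> + (- om) * psi0_star a b X \<tau> \<rho> = Pv a b X \<tau> \<rho> + (- om) * Pvs a b X \<tau> \<rho>"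
proof (cases "X = a")
  case True show ?thesis unfolding psiRr True Pv_a comb1 const_eqs by (rule refl)
next
  case False
  hence "X \<noteq> a" "X \<noteq> b" using assms by auto
  thus ?thesis unfolding psiRr Pv_i[OF \<open>X \<noteq> a\<close> \<open>X \<noteq> b\<close>] comb2 const_eqs by simp
qed

lemma BotL:
  assumes "a < X" "X \<le> b"
  shows "psi0 a b (X-1) \<tau> \<rho> + (\<i> * om) * psi0_star a b (X-1) \<tau> \<rho> = Pv a b X \<tau> \<rho> + (\<i> * om) * Pvs a b X \<tau> \<rho>"
proof (cases "X = b")
  case True
  have ab: "a \<noteq> b" using assms by auto
  show ?thesis unfolding psiLl True Pv_b[OF ab] comb1 const_eqs by simp
next
  case False
  hence "X \<noteq> a" "X \<noteq> b" using assms by auto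
  thus ?thesis unfolding psiLl Pv_i[OF \<open>X \<noteq> a\<close> \<open>X \<noteq> b\<close>] comb2 const_eqs by simp
qed

lemma Bd_a: "Pv a b a \<tau> \<rho> + \<i> * Pvs a b a \<tau> \<rho> = 0"
  unfolding Pv_a comb1 const_eqs by simp

lemma Bd_b: "a \<noteq> b \<Longrightarrow> Pv a b b \<tau> \<rho> - \<i> * Pvs a b b \<tau> \<rho> = 0"
proof -
  assume ab: "a \<noteq> b"
  have "Pv a b b \<tau> \<rho> + (- \<i>) * Pvs a b b \<tau> \<rho> = 0"
    unfolding Pv_b[OF ab] comb1 const_eqs by simp
  thus ?thesis by simp
qed

lemma TopR:
  assumes ab: "a < b" and X: "a \<le> X" "X < b"
  shows "sandw a b (Tinv a b) (Tmat a b) (\<lambda>\<tau> \<rho>. psi0 a b X \<tau> \<rho> + (- \<i> * om) * psi0_star a b X \<tau> \<rho>)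
       = (\<lambda>\<tau> \<rho>. Pv a b X \<tau> \<rho> + (- \<i> * om) * Pvs a b X \<tau> \<rho>)"
proof -
  have e0: "(\<lambda>\<tau> \<rho>. psi0 a b X \<tau> \<rho> + (- \<i> * om) * psi0_star a b X \<tau> \<rho>)
      = (\<lambda>\<tau> \<rho>. gUr * Lop a b X (-(1+sq)) 1 \<tau> \<rho> + 0 * Lop a b X (-(1+sq)) 1 \<tau> \<rho>)"
    unfolding psiUr by simp
  show ?thesis
  proof (cases "X = a")
    case True
    have e1: "sandw a b (Tinv a b) (Tmat a b) (Lop a b X (-(1+sq)) 1) = Lop a b a (-(1+sq)) (-1)"
      using rel_to_F[OF ab rel_Ta[OF ab] supp_Lop] True ab by simp
    show ?thesis unfolding e0 sandw_lin e1
    proof (intro ext)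
      fix \<tau> \<rho>
      have "Lop a b a (-(1+sq)) (-1) \<tau> \<rho> = (-1) * Lop a b a (1+sq) 1 \<tau> \<rho>" unfolding Lop_scale by simp
      moreover have "Pv a b X \<tau> \<rho> + (- \<i> * om) * Pvs a b X \<tau> \<rho> = gUr * (-1) * Lop a b a (1+sq) 1 \<tau> \<rho>"
        unfolding True Pv_a comb1 const_eqs ..
      ultimately show "gUr * Lop a b a (-(1+sq)) (-1) \<tau> \<rho> + 0 * Lop a b a (-(1+sq)) (-1) \<tau> \<rho> = Pv a b X \<tau> \<rho> + (- \<i> * om) * Pvs a b X \<tau> \<rho>"
        by simp
    qed
  next
    case False
    have e1: "sandw a b (Tinv a b) (Tmat a b) (Lop a b X (-(1+sq)) 1) =
      (\<lambda>\<tau> \<rho>. - sq * Lop a b X (1+sq) 1 \<tau> \<rho> + (1+sq) * Lop a b (X-1) (sq-1) 1 \<tau> \<rho>)"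
      using False X ab by (intro rel_to_F rel_T1 supp_lin supp_Lop) auto
    show ?thesis unfolding e0 sandw_lin e1
    proof (intro ext)
      fix \<tau> \<rho>
      have "Pv a b X \<tau> \<rho> + (- \<i> * om) * Pvs a b X \<tau> \<rho> = gUr * (- sq) * Lop a b X (1+sq) 1 \<tau> \<rho> + gUr * (1 + sq) * Lop a b (X-1) (sq-1) 1 \<tau> \<rho>"
      proof -
        have "X \<noteq> a" "X \<noteq> b" using False X by auto
        thus ?thesis unfolding Pv_i[OF \<open>X \<noteq> a\<close> \<open>X \<noteq> b\<close>] comb2 const_eqs by simp
      qed
      thus "gUr * (- sq * Lop a b X (1+sq) 1 \<tau> \<rho> + (1+sq) * Lop a b (X-1) (sq-1) 1 \<tau> \<rho>) + 0 * (- sq * Lop a b X (1+sq) 1 \<tau> \<rho> + (1+sq) * Lop a b (X-1) (sq-1) 1 \<tau> \<rho>) = Pv a b X \<tau> \<rho> + (- \<i> * om) * Pvs a b X \<tau> \<rho>"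
        by (simp add: algebra_simps)
    qed
  qed
qed

lemma TopL:
  assumes ab: "a < b" and X: "a < X" "X \<le> b"
  shows "sandw a b (Tinv a b) (Tmat a b) (\<lambda>\<tau> \<rho>. psi0 a b (X-1) \<tau> \<rho> + om * psi0_star a b (X-1) \<tau> \<rho>)
       = (\<lambda>\<tau> \<rho>. Pv a b X \<tau> \<rho> + om * Pvs a b X \<tau> \<rho>)"
proof -
  have e0: "(\<lambda>\<tau> \<rho>. psi0 a b (X-1) \<tau> \<rho> + om * psi0_star a b (X-1) \<tau> \<rho>)
      = (\<lambda>\<tau> \<rho>. gUl * Lop a b (X-1) (1-sq) 1 \<tau> \<rho> + 0 * Lop a b (X-1) (1-sq) 1 \<tau> \<rho>)"
    unfolding psiUl by simp
  show ?thesis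
  proof (cases "X = b")
    case True
    have e1: "sandw a b (Tinv a b) (Tmat a b) (Lop a b (X-1) (1-sq) 1) = Lop a b (b-1) (sq-1) 1"
      using rel_to_F[OF ab rel_Tb[OF ab] supp_Lop] True ab by simp
    show ?thesis unfolding e0 sandw_lin e1
    proof (intro ext)
      fix \<tau> \<rho>
      have "Pv a b X \<tau> \<rho> + om * Pvs a b X \<tau> \<rho> = gUl * Lop a b (b-1) (sq-1) 1 \<tau> \<rho>"
      proof -
        have ab': "a \<noteq> b" using ab by simp
        show ?thesis unfolding True Pv_b[OF ab'] comb1 const_eqs by simp
      qed
      thus "gUl * Lop a b (b-1) (sq-1) 1 \<tau> \<rho> + 0 * Lop a b (b-1) (sq-1) 1 \<tau> \<rho> = Pv a b X \<tau> \<rho> + om * Pvs a b X \<tau> \<rho>"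
        by simp
    qed
  next
    case False
    have e1: "sandw a b (Tinv a b) (Tmat a b) (Lop a b (X-1) (1-sq) 1) =
      (\<lambda>\<tau> \<rho>. (1 - sq) * Lop a b X (1+sq) 1 \<tau> \<rho> + sq * Lop a b (X-1) (sq-1) 1 \<tau> \<rho>)"
      using False X ab by (intro rel_to_F rel_T2 supp_lin supp_Lop) auto
    show ?thesis unfolding e0 sandw_lin e1
    proof (intro ext)
      fix \<tau> \<rho>
      have "Pv a b X \<tau> \<rho> + om * Pvs a b X \<tau> \<rho> = gUl * (1 - sq) * Lop a b X (1+sq) 1 \<tau> \<rho> + gUl * sq * Lop a b (X-1) (sq-1) 1 \<tau> \<rho>"
      proof -
        have "X \<noteq> a" "X \<noteq> b" using False X by auto
        thus ?thesis unfolding Pv_i[OF \<open>X \<noteq> a\<close> \<open>X \<noteq> b\<close>] comb2 const_eqs by simp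
      qed
      thus "gUl * ((1 - sq) * Lop a b X (1+sq) 1 \<tau> \<rho> + sq * Lop a b (X-1) (sq-1) 1 \<tau> \<rho>) + 0 * ((1 - sq) * Lop a b X (1+sq) 1 \<tau> \<rho> + sq * Lop a b (X-1) (sq-1) 1 \<tau> \<rho>) = Pv a b X \<tau> \<rho> + om * Pvs a b X \<tau> \<rho>"
        by (simp add: algebra_simps)
    qed
  qed
qed

lemma CG_scale: "A \<in> CliffGen a b \<Longrightarrow> (\<lambda>\<tau> \<rho>. c * A \<tau> \<rho>) \<in> CliffGen a b"
  using CG_lin[of A a b A c 0] by simp

lemma CG_Pv: "a < b \<Longrightarrow> a \<le> X \<Longrightarrow> X \<le> b \<Longrightarrow> Pv a b X \<in> CliffGen a b"
  unfolding Pv_def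
  by (cases "X = a"; cases "X = b") (auto intro!: CG_scale CG_lin CG_Lop)

lemma CG_Pvs: "a < b \<Longrightarrow> a \<le> X \<Longrightarrow> X \<le> b \<Longrightarrow> Pvs a b X \<in> CliffGen a b"
  unfolding Pvs_def
  by (cases "X = a"; cases "X = b") (auto intro!: CG_scale CG_lin CG_Lop)



lemma int_sq_lemma:
  fixes m n :: int
  shows "m * m + m + n * n = 0 \<longleftrightarrow> n = 0 \<and> (m = 0 \<or> m = -1)"
proof
  assume h: "m * m + m + n * n = 0"
  have m0: "m * m + m \<ge> 0"
  proof (cases "m \<ge> 0")
    case True thus ?thesis by simp
  next
    case False hence "m \<le> -1" by simp
    hence "m * (m + 1) \<ge> 0" by (simp add: mult_nonpos_nonpos)
    thus ?thesis by (simp add: algebra_simps)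
  qed
  have n0: "n * n \<ge> 0" by simp
  have "n * n = 0" using h m0 n0 by linarith
  hence n: "n = 0" by simp
  hence "m * (m + 1) = 0" using h by (simp add: algebra_simps)
  thus "n = 0 \<and> (m = 0 \<or> m = -1)" using n by auto
next
  assume "n = 0 \<and> (m = 0 \<or> m = -1)" thus "m * m + m + n * n = 0" by auto
qed

lemma cmod_Complex_half: "cmod (Complex u w) = 1/2 \<longleftrightarrow> u * u + w * w = 1/4"
proof -
  have "cmod (Complex u w) = 1/2 \<longleftrightarrow> (cmod (Complex u w))^2 = (1/2)^2"
    by (rule power2_eq_iff_nonneg[symmetric]) auto
  also have "(cmod (Complex u w))^2 = u * u + w * w" using cmod_power2[of "Complex u w"] by (simp add: power2_eq_square)
  also have "(1/2::real)^2 = 1/4" by (simp add: power2_eq_square)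
  finally show ?thesis .
qed

lemma dist_A: "cmod (Complex (of_int m + 1/2) (of_int n)) = 1/2 \<longleftrightarrow> n = 0 \<and> (m = 0 \<or> m = -1)"
proof -
  have e: "(of_int m + 1/2) * (of_int m + 1/2) + of_int n * of_int n = 1/4 + (of_int (m * m + m + n * n) :: real)"
    by (simp add: algebra_simps)
  have "(of_int m + 1/2) * (of_int m + 1/2) + of_int n * of_int n = (1/4::real) \<longleftrightarrow> (of_int (m * m + m + n * n) :: real) = 0"
    unfolding e by linarith
  also have "\<dots> \<longleftrightarrow> m * m + m + n * n = 0" by (rule of_int_eq_0_iff)
  finally show ?thesis unfolding cmod_Complex_half int_sq_lemma .
qed

lemma dist_B: "cmod (Complex (of_int n) (of_int m + 1/2)) = 1/2 \<longleftrightarrow> n = 0 \<and> (m = 0 \<or> m = -1)"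
proof -
  have "cmod (Complex (of_int n) (of_int m + 1/2)) = cmod (Complex (of_int m + 1/2) (of_int n))"
    by (simp add: cmod_def add.commute)
  thus ?thesis using dist_A by simp
qed

lemma Complex_diff: "Complex x1 y1 - Complex x2 y2 = Complex (x1 - x2) (y1 - y2)"
  by (simp add: complex_eq_iff)

lemma d_hv: "cmod (Complex (of_int k + 1/2) (of_int y) - Complex (of_int X) (of_int Y)) = 1/2 \<longleftrightarrow> Y = y \<and> (X = k \<or> X = k + 1)"
proof -
  have e: "Complex (of_int k + 1/2) (of_int y) - Complex (of_int X) (of_int Y) = Complex (of_int (k - X) + 1/2) (of_int (y - Y))"
    by (simp add: Complex_diff)
  show ?thesis unfolding e dist_A by auto
qed

lemma d_hp: "cmod (Complex (of_int k + 1/2) (of_int y) - Complex (of_int K + 1/2) (of_int Y' + 1/2)) = 1/2 \<longleftrightarrow> K = k \<and> (Y' = y \<or> Y' = y - 1)"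
proof -
  have e: "Complex (of_int k + 1/2) (of_int y) - Complex (of_int K + 1/2) (of_int Y' + 1/2) = Complex (of_int (k - K)) (of_int (y - Y' - 1) + 1/2)"
    by (simp add: Complex_diff)
  show ?thesis unfolding e dist_B by auto
qed

lemma d_vv: "cmod (Complex (of_int x) (of_int y + 1/2) - Complex (of_int X) (of_int Y)) = 1/2 \<longleftrightarrow> X = x \<and> (Y = y \<or> Y = y + 1)"
proof -
  have e: "Complex (of_int x) (of_int y + 1/2) - Complex (of_int X) (of_int Y) = Complex (of_int (x - X)) (of_int (y - Y) + 1/2)"
    by (simp add: Complex_diff)
  show ?thesis unfolding e dist_B by auto
qed

lemma d_vp: "cmod (Complex (of_int x) (of_int y + 1/2) - Complex (of_int K + 1/2) (of_int Y' + 1/2)) = 1/2 \<longleftrightarrow> Y' = y \<and> (K = x \<or> K = x - 1)"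
proof -
  have e: "Complex (of_int x) (of_int y + 1/2) - Complex (of_int K + 1/2) (of_int Y' + 1/2) = Complex (of_int (x - K - 1) + 1/2) (of_int (y - Y'))"
    by (simp add: Complex_diff)
  show ?thesis unfolding e dist_A by auto
qed

definition lamf :: "complex \<Rightarrow> complex \<Rightarrow> complex" where
  "lamf v p = \<i> * complex_of_real (cmod (v - p)) / (v - p)"

lemma sqrt_half: "sqrt (1/2) = sqrt 2 / 2"
proof -
  have "sqrt (1/2) = sqrt (2 / 4)" by simp
  also have "\<dots> = sqrt 2 / sqrt 4" by (rule real_sqrt_divide)
  also have "sqrt 4 = (2::real)" by (simp add: real_sqrt_four)
  finally show ?thesis .
qed

lemma cmod_half: "cmod (Complex s t) = sqrt 2 / 2" if "s * s = 1/4" "t * t = 1/4"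
proof -
  have "s * s + t * t = 1/2" using that by simp
  moreover have "cmod (Complex s t) = sqrt (s * s + t * t)" by (simp add: cmod_def power2_eq_square)
  ultimately show ?thesis using sqrt_half by (simp only:)
qed

lemma div_eq: "y \<noteq> 0 \<Longrightarrow> c = z * y \<Longrightarrow> c / y = (z::complex)" by simp

lemma lam_gen:
  assumes "X = K \<or> X = K + 1" "Y = Y' \<or> Y = Y' + 1"
  shows "lamf (Complex (of_int X) (of_int Y)) (Complex (of_int K + 1/2) (of_int Y' + 1/2)) =
    (if X = K then (if Y = Y' then - om else - \<i> * om) else (if Y = Y' then \<i> * om else om))"
  using assms
proof (elim disjE)
  assume "X = K" "Y = Y'"
  hence d: "Complex (of_int X) (of_int Y) - Complex (of_int K + 1/2) (of_int Y' + 1/2) = Complex (-1/2) (-1/2)"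
    by (simp add: Complex_diff)
  show ?thesis unfolding lamf_def d using \<open>X = K\<close> \<open>Y = Y'\<close>
    by simp (rule div_eq, simp_all add: complex_eq_iff om_def cmod_half algebra_simps s2r)
next
  assume "X = K" "Y = Y' + 1"
  hence d: "Complex (of_int X) (of_int Y) - Complex (of_int K + 1/2) (of_int Y' + 1/2) = Complex (-1/2) (1/2)"
    by (simp add: Complex_diff)
  show ?thesis unfolding lamf_def d using \<open>X = K\<close> \<open>Y = Y' + 1\<close>
    by simp (rule div_eq, simp_all add: complex_eq_iff om_def cmod_half algebra_simps s2r)
next
  assume "X = K + 1" "Y = Y'"
  hence d: "Complex (of_int X) (of_int Y) - Complex (of_int K + 1/2) (of_int Y' + 1/2) = Complex (1/2) (-1/2)"
    by (simp add: Complex_diff)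
  show ?thesis unfolding lamf_def d using \<open>X = K + 1\<close> \<open>Y = Y'\<close>
    by simp (rule div_eq, simp_all add: complex_eq_iff om_def cmod_half algebra_simps s2r)
next
  assume "X = K + 1" "Y = Y' + 1"
  hence d: "Complex (of_int X) (of_int Y) - Complex (of_int K + 1/2) (of_int Y' + 1/2) = Complex (1/2) (1/2)"
    by (simp add: Complex_diff)
  show ?thesis unfolding lamf_def d using \<open>X = K + 1\<close> \<open>Y = Y' + 1\<close>
    by simp (rule div_eq, simp_all add: complex_eq_iff om_def cmod_half algebra_simps s2r)
qed



definition Psi :: "int \<Rightarrow> int \<Rightarrow> complex \<Rightarrow> op" where
  "Psi a b z = (if Im z = of_int \<lfloor>Im z\<rfloor> then conjT a b \<lfloor>Im z\<rfloor> (psi0 a b \<lfloor>Re z\<rfloor>)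
                else conjT a b \<lfloor>Im z\<rfloor> (Pv a b \<lfloor>Re z\<rfloor>))"

definition Psis :: "int \<Rightarrow> int \<Rightarrow> complex \<Rightarrow> op" where
  "Psis a b z = (if Im z = of_int \<lfloor>Im z\<rfloor> then conjT a b \<lfloor>Im z\<rfloor> (psi0_star a b \<lfloor>Re z\<rfloor>)
                else conjT a b \<lfloor>Im z\<rfloor> (Pvs a b \<lfloor>Re z\<rfloor>))"

lemma floor_half: "\<lfloor>(of_int k + 1/2 :: real)\<rfloor> = k"
  by (rule floor_unique) auto

lemma not_int_half: "(of_int y + 1/2 :: real) \<noteq> of_int k"
proof
  assume "(of_int y + 1/2 :: real) = of_int k"
  hence "(2 * of_int y + 1 :: real) = 2 * of_int k" by simp
  hence "(of_int (2 * y + 1) :: real) = of_int (2 * k)" by simp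
  hence "2 * y + 1 = 2 * k" by (simp only: of_int_eq_iff)
  thus False by presburger
qed

lemma Psi_h: "Psi a b (Complex (of_int k + 1/2) (of_int y)) = conjT a b y (psi0 a b k)"
  "Psis a b (Complex (of_int k + 1/2) (of_int y)) = conjT a b y (psi0_star a b k)"
  by (simp_all add: Psi_def Psis_def floor_half)

lemma Psi_v: "Psi a b (Complex (of_int x) (of_int y + 1/2)) = conjT a b y (Pv a b x)"
  "Psis a b (Complex (of_int x) (of_int y + 1/2)) = conjT a b y (Pvs a b x)"
  by (simp_all add: Psi_def Psis_def floor_half not_int_half)

lemma conj_eq:
  assumes "\<And>\<tau> \<rho>. A \<tau> \<rho> + l * B \<tau> \<rho> = C \<tau> \<rho> + l * D \<tau> \<rho>"
  shows "conjT a b y A \<tau> \<rho> + l * conjT a b y B \<tau> \<rho> = conjT a b y C \<tau> \<rho> + l * conjT a b y D \<tau> \<rho>"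
proof -
  have "conjT a b y A \<tau> \<rho> + l * conjT a b y B \<tau> \<rho> = conjT a b y (\<lambda>\<tau> \<rho>. 1 * A \<tau> \<rho> + l * B \<tau> \<rho>) \<tau> \<rho>"
    using conj_lin[of a b y 1 A l B] by simp
  also have "(\<lambda>\<tau> \<rho>. 1 * A \<tau> \<rho> + l * B \<tau> \<rho>) = (\<lambda>\<tau> \<rho>. 1 * C \<tau> \<rho> + l * D \<tau> \<rho>)"
    using assms by simp
  also have "conjT a b y (\<lambda>\<tau> \<rho>. 1 * C \<tau> \<rho> + l * D \<tau> \<rho>) \<tau> \<rho> = conjT a b y C \<tau> \<rho> + l * conjT a b y D \<tau> \<rho>"
    using conj_lin[of a b y 1 C l D] by simp
  finally show ?thesis .
qed

lemma conj_eq_step: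
  assumes ab: "a < b" and sA: "op_supported a b A" and sB: "op_supported a b B"
    and h: "sandw a b (Tinv a b) (Tmat a b) (\<lambda>\<tau> \<rho>. A \<tau> \<rho> + l * B \<tau> \<rho>) = (\<lambda>\<tau> \<rho>. C \<tau> \<rho> + l * D \<tau> \<rho>)"
  shows "conjT a b (y + 1) A \<tau> \<rho> + l * conjT a b (y + 1) B \<tau> \<rho> = conjT a b y C \<tau> \<rho> + l * conjT a b y D \<tau> \<rho>"
proof -
  have s: "op_supported a b (\<lambda>\<tau> \<rho>. 1 * A \<tau> \<rho> + l * B \<tau> \<rho>)" by (intro supp_lin sA sB)
  have "conjT a b (y + 1) A \<tau> \<rho> + l * conjT a b (y + 1) B \<tau> \<rho> = conjT a b (y + 1) (\<lambda>\<tau> \<rho>. 1 * A \<tau> \<rho> + l * B \<tau> \<rho>) \<tau> \<rho>"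
    using conj_lin[of a b "y + 1" 1 A l B] by simp
  also have "\<dots> = conjT a b y (sandw a b (Tinv a b) (Tmat a b) (\<lambda>\<tau> \<rho>. 1 * A \<tau> \<rho> + l * B \<tau> \<rho>)) \<tau> \<rho>"
    by (simp only: conj_step[OF ab s])
  also have "(\<lambda>\<tau> \<rho>. 1 * A \<tau> \<rho> + l * B \<tau> \<rho>) = (\<lambda>\<tau> \<rho>. A \<tau> \<rho> + l * B \<tau> \<rho>)" by simp
  also note h
  also have "conjT a b y (\<lambda>\<tau> \<rho>. C \<tau> \<rho> + l * D \<tau> \<rho>) \<tau> \<rho> = conjT a b y C \<tau> \<rho> + l * conjT a b y D \<tau> \<rho>"
    using conj_lin[of a b y 1 C l D] by simp
  finally show ?thesis .
qed

lemma supp_psi0: "k \<le> b \<Longrightarrow> op_supported a b (psi0 a b k)"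
  unfolding psi0_Lop by (rule supp_Lop)
lemma supp_psi0_star: "k \<le> b \<Longrightarrow> op_supported a b (psi0_star a b k)"
  unfolding psi0_star_Lop by (rule supp_Lop)

lemma CSH_hv:
  assumes ab: "a < b" and k: "a \<le> k" "k \<le> b - 1" and x: "a \<le> x" "x \<le> b"
    and d1: "cmod (Complex (of_int k + 1/2) (of_int y) - Complex (of_int X) (of_int Y)) = 1/2"
    and d2: "cmod (Complex (of_int x) (of_int y2 + 1/2) - Complex (of_int X) (of_int Y)) = 1/2"
    and d3: "cmod (Complex (of_int k + 1/2) (of_int y) - Complex (of_int K + 1/2) (of_int Y' + 1/2)) = 1/2"
    and d4: "cmod (Complex (of_int x) (of_int y2 + 1/2) - Complex (of_int K + 1/2) (of_int Y' + 1/2)) = 1/2"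
  shows "Psi a b (Complex (of_int k + 1/2) (of_int y)) \<tau> \<rho> + lamf (Complex (of_int X) (of_int Y)) (Complex (of_int K + 1/2) (of_int Y' + 1/2)) * Psis a b (Complex (of_int k + 1/2) (of_int y)) \<tau> \<rho>
       = Psi a b (Complex (of_int x) (of_int y2 + 1/2)) \<tau> \<rho> + lamf (Complex (of_int X) (of_int Y)) (Complex (of_int K + 1/2) (of_int Y' + 1/2)) * Psis a b (Complex (of_int x) (of_int y2 + 1/2)) \<tau> \<rho>"
proof -
  from d1 have h1: "Y = y" "X = k \<or> X = k + 1" unfolding d_hv by auto
  from d2 have h2: "X = x" "Y = y2 \<or> Y = y2 + 1" unfolding d_vv by auto
  from d3 have h3: "K = k" "Y' = y \<or> Y' = y - 1" unfolding d_hp by auto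
  from d4 have h4: "Y' = y2" "K = x \<or> K = x - 1" unfolding d_vp by auto
  have L: "lamf (Complex (of_int X) (of_int Y)) (Complex (of_int K + 1/2) (of_int Y' + 1/2)) =
    (if X = K then (if Y = Y' then - om else - \<i> * om) else (if Y = Y' then \<i> * om else om))"
    using h1 h3 by (intro lam_gen) auto
  show ?thesis
  proof (cases "X = k"; cases "Y' = y")
    assume c: "X = k" "Y' = y"
    hence e: "x = k" "y2 = y" "X = K" "Y = Y'" using h1 h2 h3 h4 by auto
    have lv: "lamf (Complex (of_int X) (of_int Y)) (Complex (of_int K + 1/2) (of_int Y' + 1/2)) = - om"
      unfolding L using e by simp
    show ?thesis unfolding lv Psi_h Psi_v e(1,2) using k by (intro conj_eq BotR) auto
  next
    assume c: "X = k" "Y' \<noteq> y"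
    hence e: "x = k" "y2 = y - 1" "X = K" "Y \<noteq> Y'" "y = (y - 1) + 1" using h1 h2 h3 h4 by auto
    have lv: "lamf (Complex (of_int X) (of_int Y)) (Complex (of_int K + 1/2) (of_int Y' + 1/2)) = - \<i> * om"
      unfolding L using e by simp
    show ?thesis unfolding lv Psi_h Psi_v e(1,2)
      apply (subst (1 2) e(5))
      using k ab by (intro conj_eq_step TopR supp_psi0 supp_psi0_star) auto
  next
    assume c: "X \<noteq> k" "Y' = y"
    hence e: "x = k + 1" "y2 = y" "X \<noteq> K" "Y = Y'" "k = (k + 1) - 1" using h1 h2 h3 h4 by auto
    have lv: "lamf (Complex (of_int X) (of_int Y)) (Complex (of_int K + 1/2) (of_int Y' + 1/2)) = \<i> * om"
      unfolding L using e by simp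
    show ?thesis unfolding lv Psi_h Psi_v e(1,2)
      apply (subst (1 2) e(5))
      using k by (intro conj_eq BotL) auto
  next
    assume c: "X \<noteq> k" "Y' \<noteq> y"
    hence e: "x = k + 1" "y2 = y - 1" "X \<noteq> K" "Y \<noteq> Y'" "k = (k + 1) - 1" "y = (y - 1) + 1" using h1 h2 h3 h4 by auto
    have lv: "lamf (Complex (of_int X) (of_int Y)) (Complex (of_int K + 1/2) (of_int Y' + 1/2)) = om"
      unfolding L using e by simp
    show ?thesis unfolding lv Psi_h Psi_v e(1,2)
      apply (subst (1 2) e(6))
      apply (subst (1 2) e(5))
      using k ab by (intro conj_eq_step TopL supp_psi0 supp_psi0_star) auto
  qed
qed



lemma conj_zero: "conjT a b y (\<lambda>\<tau> \<rho>. 0) = (\<lambda>\<tau> \<rho>. 0)"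
  unfolding conjT_def sandw_def op_mult_def by simp

lemma edges_cases:
  assumes "z \<in> edges a b"
  obtains k y where "a \<le> k" "k \<le> b - 1" "z = Complex (of_int k + 1/2) (of_int y)"
  | x y where "a \<le> x" "x \<le> b" "z = Complex (of_int x) (of_int y + 1/2)"
  using assms unfolding edges_def by blast

lemma CSH_all:
  assumes ab: "a < b" and z1: "z1 \<in> edges a b" and z2: "z2 \<in> edges a b"
    and v: "v \<in> vertices a b" and p: "p \<in> face_centres a b"
    and d: "cmod (z1 - v) = 1/2" "cmod (z2 - v) = 1/2" "cmod (z1 - p) = 1/2" "cmod (z2 - p) = 1/2"
  shows "Psi a b z1 \<tau> \<rho> + lamf v p * Psis a b z1 \<tau> \<rho> = Psi a b z2 \<tau> \<rho> + lamf v p * Psis a b z2 \<tau> \<rho>"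
proof -
  obtain X Y where vv: "v = Complex (of_int X) (of_int Y)" using v unfolding vertices_def by blast
  obtain K Y' where pp: "p = Complex (of_int K + 1/2) (of_int Y' + 1/2)" using p unfolding face_centres_def by blast
  show ?thesis
  proof (cases rule: edges_cases[OF z1])
    case (1 k1 y1)
    note h1 = this
    show ?thesis
    proof (cases rule: edges_cases[OF z2])
      case (1 k2 y2)
      have "Y = y1" "Y = y2" using d(1,2) unfolding h1(3) 1(3) vv d_hv by auto
      moreover have "K = k1" "K = k2" using d(3,4) unfolding h1(3) 1(3) pp d_hp by auto
      ultimately have "z1 = z2" using h1(3) 1(3) by simp
      thus ?thesis by simp
    next
      case (2 x2 y2)
      show ?thesis unfolding h1(3) 2(3) vv pp
        by (rule CSH_hv[OF ab h1(1,2) 2(1,2)]) (use d in \<open>simp_all add: h1(3) 2(3) vv pp\<close>)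
    qed
  next
    case (2 x1 y1)
    note h1 = this
    show ?thesis
    proof (cases rule: edges_cases[OF z2])
      case (1 k2 y2)
      show ?thesis unfolding h1(3) 1(3) vv pp
        by (rule CSH_hv[OF ab 1(1,2) h1(1,2), symmetric]) (use d in \<open>simp_all add: h1(3) 1(3) vv pp\<close>)
    next
      case (2 x2 y2)
      have "X = x1" "X = x2" using d(1,2) unfolding h1(3) 2(3) vv d_vv by auto
      moreover have "Y' = y1" "Y' = y2" using d(3,4) unfolding h1(3) 2(3) pp d_vp by auto
      ultimately have "z1 = z2" using h1(3) 2(3) by simp
      thus ?thesis by simp
    qed
  qed
qed

lemma existence:
  assumes ab: "a < b"
  shows "extension_conds a b (Psi a b) (Psis a b)"
  unfolding extension_conds_def
proof (intro conjI)
  show "\<forall>z\<in>edges a b. Psi a b z \<in> CliffGen a b \<and> Psis a b z \<in> CliffGen a b"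
  proof
    fix z assume z: "z \<in> edges a b"
    show "Psi a b z \<in> CliffGen a b \<and> Psis a b z \<in> CliffGen a b"
    proof (cases rule: edges_cases[OF z])
      case (1 k y) thus ?thesis unfolding 1(3) Psi_h
        by (intro conjI conj_CG[OF ab] CG_psi0 CG_psi0_star)
    next
      case (2 x y) thus ?thesis unfolding 2(3) Psi_v using ab
        by (intro conjI conj_CG[OF ab] CG_Pv CG_Pvs) auto
    qed
  qed
  show "\<forall>k y. a \<le> k \<and> k \<le> b - 1 \<longrightarrow>
        Psi a b (Complex (of_int k + 1/2) (of_int y)) =
          op_mult a b (op_zpow a b (Tmat a b) (- y)) (op_mult a b (psi0 a b k) (op_zpow a b (Tmat a b) y))
      \<and> Psis a b (Complex (of_int k + 1/2) (of_int y)) =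
          op_mult a b (op_zpow a b (Tmat a b) (- y)) (op_mult a b (psi0_star a b k) (op_zpow a b (Tmat a b) y))"
    by (simp add: Psi_h conjT_def sandw_def)
  show "\<forall>z1\<in>edges a b. \<forall>z2\<in>edges a b. \<forall>v\<in>vertices a b. \<forall>p\<in>face_centres a b.
        cmod (z1 - v) = 1/2 \<and> cmod (z2 - v) = 1/2 \<and> cmod (z1 - p) = 1/2 \<and> cmod (z2 - p) = 1/2
        \<longrightarrow> (\<forall>\<tau> \<rho>.
             Psi a b z1 \<tau> \<rho> + \<i> * complex_of_real (cmod (v - p)) / (v - p) * Psis a b z1 \<tau> \<rho> =
             Psi a b z2 \<tau> \<rho> + \<i> * complex_of_real (cmod (v - p)) / (v - p) * Psis a b z2 \<tau> \<rho>)"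
    using CSH_all[OF ab] unfolding lamf_def by blast
  show "\<forall>y::int. \<forall>\<tau> \<rho>.
        Psi a b (Complex (of_int a) (of_int y + 1/2)) \<tau> \<rho> + \<i> * Psis a b (Complex (of_int a) (of_int y + 1/2)) \<tau> \<rho> = 0
      \<and> Psi a b (Complex (of_int b) (of_int y + 1/2)) \<tau> \<rho> - \<i> * Psis a b (Complex (of_int b) (of_int y + 1/2)) \<tau> \<rho> = 0"
  proof (intro allI conjI)
    fix y :: int and \<tau> \<rho>
    have "conjT a b y (Pv a b a) \<tau> \<rho> + \<i> * conjT a b y (Pvs a b a) \<tau> \<rho> = conjT a b y (\<lambda>\<tau> \<rho>. 0) \<tau> \<rho> + \<i> * conjT a b y (\<lambda>\<tau> \<rho>. 0) \<tau> \<rho>"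
      by (rule conj_eq) (simp add: Bd_a)
    thus "Psi a b (Complex (of_int a) (of_int y + 1/2)) \<tau> \<rho> + \<i> * Psis a b (Complex (of_int a) (of_int y + 1/2)) \<tau> \<rho> = 0"
      unfolding Psi_v conj_zero by simp
    have ab': "a \<noteq> b" using ab by simp
    have "conjT a b y (Pv a b b) \<tau> \<rho> + (- \<i>) * conjT a b y (Pvs a b b) \<tau> \<rho> = conjT a b y (\<lambda>\<tau> \<rho>. 0) \<tau> \<rho> + (- \<i>) * conjT a b y (\<lambda>\<tau> \<rho>. 0) \<tau> \<rho>"
      by (rule conj_eq) (use Bd_b[OF ab'] in simp)
    thus "Psi a b (Complex (of_int b) (of_int y + 1/2)) \<tau> \<rho> - \<i> * Psis a b (Complex (of_int b) (of_int y + 1/2)) \<tau> \<rho> = 0"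
      unfolding Psi_v conj_zero by simp
  qed
qed

lemma solve2:
  fixes l0 l1 P1 P2 Q1 Q2 :: complex
  assumes "l0 \<noteq> l1" "P1 + l0 * Q1 = P2 + l0 * Q2" "P1 + l1 * Q1 = P2 + l1 * Q2"
  shows "P1 = P2 \<and> Q1 = Q2"
proof -
  have "(l0 - l1) * (Q1 - Q2) = ((P1 + l0 * Q1) - (P2 + l0 * Q2)) - ((P1 + l1 * Q1) - (P2 + l1 * Q2))"
    by (simp add: algebra_simps)
  also have "\<dots> = 0" using assms(2,3) by simp
  finally have "Q1 = Q2" using assms(1) by simp
  thus ?thesis using assms(2) by simp
qed

lemma om_ne: "- om \<noteq> - \<i> * om" "\<i> * om \<noteq> om"
  by (simp_all add: complex_eq_iff om_def)

lemma uniqueness: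
  assumes ab: "a < b" and E1: "extension_conds a b P1 Q1" and E2: "extension_conds a b P2 Q2"
    and z: "z \<in> edges a b"
  shows "P1 z = P2 z \<and> Q1 z = Q2 z"
proof -
  have H1: "\<And>k y. a \<le> k \<Longrightarrow> k \<le> b - 1 \<Longrightarrow> P1 (Complex (of_int k + 1/2) (of_int y)) = P2 (Complex (of_int k + 1/2) (of_int y))
       \<and> Q1 (Complex (of_int k + 1/2) (of_int y)) = Q2 (Complex (of_int k + 1/2) (of_int y))"
    using E1 E2 unfolding extension_conds_def by (elim conjE) simp
  have C1all: "\<forall>z1\<in>edges a b. \<forall>z2\<in>edges a b. \<forall>v\<in>vertices a b. \<forall>p\<in>face_centres a b.
        cmod (z1 - v) = 1/2 \<and> cmod (z2 - v) = 1/2 \<and> cmod (z1 - p) = 1/2 \<and> cmod (z2 - p) = 1/2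
        \<longrightarrow> (\<forall>\<tau> \<rho>. P1 z1 \<tau> \<rho> + lamf v p * Q1 z1 \<tau> \<rho> = P1 z2 \<tau> \<rho> + lamf v p * Q1 z2 \<tau> \<rho>)"
    using E1 unfolding extension_conds_def lamf_def by (elim conjE)
  have C2all: "\<forall>z1\<in>edges a b. \<forall>z2\<in>edges a b. \<forall>v\<in>vertices a b. \<forall>p\<in>face_centres a b.
        cmod (z1 - v) = 1/2 \<and> cmod (z2 - v) = 1/2 \<and> cmod (z1 - p) = 1/2 \<and> cmod (z2 - p) = 1/2
        \<longrightarrow> (\<forall>\<tau> \<rho>. P2 z1 \<tau> \<rho> + lamf v p * Q2 z1 \<tau> \<rho> = P2 z2 \<tau> \<rho> + lamf v p * Q2 z2 \<tau> \<rho>)"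
    using E2 unfolding extension_conds_def lamf_def by (elim conjE)
  have C1: "P1 z1 \<tau> \<rho> + lamf v p * Q1 z1 \<tau> \<rho> = P1 z2 \<tau> \<rho> + lamf v p * Q1 z2 \<tau> \<rho>"
    if "z1 \<in> edges a b" "z2 \<in> edges a b" "v \<in> vertices a b" "p \<in> face_centres a b"
        "cmod (z1 - v) = 1/2" "cmod (z2 - v) = 1/2" "cmod (z1 - p) = 1/2" "cmod (z2 - p) = 1/2" for z1 z2 v p \<tau> \<rho>
  proof -
    have "cmod (z1 - v) = 1/2 \<and> cmod (z2 - v) = 1/2 \<and> cmod (z1 - p) = 1/2 \<and> cmod (z2 - p) = 1/2
        \<longrightarrow> (\<forall>\<tau> \<rho>. P1 z1 \<tau> \<rho> + lamf v p * Q1 z1 \<tau> \<rho> = P1 z2 \<tau> \<rho> + lamf v p * Q1 z2 \<tau> \<rho>)"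
      using C1all that(1-4) by (elim ballE) (fast+)
    thus ?thesis using that(5-8) by (elim impE allE) (intro conjI, assumption+)
  qed
  have C2: "P2 z1 \<tau> \<rho> + lamf v p * Q2 z1 \<tau> \<rho> = P2 z2 \<tau> \<rho> + lamf v p * Q2 z2 \<tau> \<rho>"
    if "z1 \<in> edges a b" "z2 \<in> edges a b" "v \<in> vertices a b" "p \<in> face_centres a b"
        "cmod (z1 - v) = 1/2" "cmod (z2 - v) = 1/2" "cmod (z1 - p) = 1/2" "cmod (z2 - p) = 1/2" for z1 z2 v p \<tau> \<rho>
  proof -
    have "cmod (z1 - v) = 1/2 \<and> cmod (z2 - v) = 1/2 \<and> cmod (z1 - p) = 1/2 \<and> cmod (z2 - p) = 1/2
        \<longrightarrow> (\<forall>\<tau> \<rho>. P2 z1 \<tau> \<rho> + lamf v p * Q2 z1 \<tau> \<rho> = P2 z2 \<tau> \<rho> + lamf v p * Q2 z2 \<tau> \<rho>)"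
      using C2all that(1-4) by (elim ballE) (fast+)
    thus ?thesis using that(5-8) by (elim impE allE) (intro conjI, assumption+)
  qed
  show ?thesis
  proof (cases rule: edges_cases[OF z])
    case (1 k y) thus ?thesis using H1 by simp
  next
    case (2 x y)
    note zx = 2
    obtain k where k: "a \<le> k" "k \<le> b - 1" "x = k \<or> x = k + 1" and kx: "x < b \<Longrightarrow> k = x" "x = b \<Longrightarrow> k = b - 1"
    proof (cases "x < b")
      case True thus ?thesis using that[of x] zx by auto
    next
      case False thus ?thesis using that[of "b - 1"] zx ab by auto
    qed
    let ?h0 = "Complex (of_int k + 1/2) (of_int y)" and ?h1 = "Complex (of_int k + 1/2) (of_int (y + 1))"
    let ?v0 = "Complex (of_int x) (of_int y)" and ?v1 = "Complex (of_int x) (of_int (y + 1))"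
    let ?p = "Complex (of_int k + 1/2) (of_int y + 1/2)"
    have mem: "?h0 \<in> edges a b" "?h1 \<in> edges a b" "?v0 \<in> vertices a b" "?v1 \<in> vertices a b" "?p \<in> face_centres a b"
      using k zx unfolding edges_def vertices_def face_centres_def by blast+
    have dd: "cmod (z - ?v0) = 1/2" "cmod (?h0 - ?v0) = 1/2" "cmod (z - ?p) = 1/2" "cmod (?h0 - ?p) = 1/2"
             "cmod (z - ?v1) = 1/2" "cmod (?h1 - ?v1) = 1/2" "cmod (?h1 - ?p) = 1/2"
      unfolding zx(3) d_vv d_hv d_vp d_hp using k by auto
    have l0: "lamf ?v0 ?p = (if x = k then - om else \<i> * om)"
      using lam_gen[of x k y y] k by simp
    have l1: "lamf ?v1 ?p = (if x = k then - \<i> * om else om)"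
      using lam_gen[of x k "y + 1" y] k by simp
    have ne: "lamf ?v0 ?p \<noteq> lamf ?v1 ?p" unfolding l0 l1 using om_ne by auto
    have hh: "P1 ?h0 = P2 ?h0" "Q1 ?h0 = Q2 ?h0" "P1 ?h1 = P2 ?h1" "Q1 ?h1 = Q2 ?h1"
      using H1[OF k(1,2), of y] H1[OF k(1,2), of "y + 1"] by auto
    have "P1 z \<tau> \<rho> = P2 z \<tau> \<rho> \<and> Q1 z \<tau> \<rho> = Q2 z \<tau> \<rho>" for \<tau> \<rho>
    proof (rule solve2[OF ne])
      show "P1 z \<tau> \<rho> + lamf ?v0 ?p * Q1 z \<tau> \<rho> = P2 z \<tau> \<rho> + lamf ?v0 ?p * Q2 z \<tau> \<rho>"
        using C1[OF z mem(1) mem(3) mem(5) dd(1-4), of \<tau> \<rho>] C2[OF z mem(1) mem(3) mem(5) dd(1-4), of \<tau> \<rho>] hh by simp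
      show "P1 z \<tau> \<rho> + lamf ?v1 ?p * Q1 z \<tau> \<rho> = P2 z \<tau> \<rho> + lamf ?v1 ?p * Q2 z \<tau> \<rho>"
        using C1[OF z mem(2) mem(4) mem(5) dd(5,6,3,7), of \<tau> \<rho>] C2[OF z mem(2) mem(4) mem(5) dd(5,6,3,7), of \<tau> \<rho>] hh by simp
    qed
    thus ?thesis by (auto simp: fun_eq_iff)
  qed
qed

theorem proposition3p5:
  fixes a b :: int
  assumes "a < 0" and "0 < b"
  shows "\<exists>\<Psi> \<Psi>s. extension_conds a b \<Psi> \<Psi>s \<and>
           (\<forall>\<Psi>' \<Psi>s'. extension_conds a b \<Psi>' \<Psi>s' \<longrightarrow>
              (\<forall>z\<in>edges a b. \<Psi>' z = \<Psi> z \<and> \<Psi>s' z = \<Psi>s z))"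
proof -
  have ab: "a < b" using assms by simp
  show ?thesis
    using existence[OF ab] uniqueness[OF ab] by blast
qed

end
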